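(* There exists a computable enumeration of all effective quasi-Polish $\omega$-continuous domains; namely, there is a computable sequence $(\prec_i)_{i\in\omega}$ (given by c.e. indices) of c.e. interpolable transitive relations on $\omega$ such that for every c.e. interpolable transitive relation $\prec$ on $\omega$ there is $i\in\omega$ with $\mathcal{I}(\prec_i)$ computably homeomorphic to $\mathcal{I}(\prec)$.
   Context: A transitive relation $\prec$ on $\omega$ is interpolable if each initial segment $\{x\mid x\prec y\}$ is directed (non-empty and any two elements have an upper bound in it). For a transitive relation $\prec$, an ideal is a non-empty set $I\subseteq\omega$ which is a lower set and directed; $\mathcal{I}(\prec)$ is the space of ideals with topology generated by $[n]_\prec=\{I\mid n\in I\}$, numbered by $n$. For interpolable c.e. $\prec$, $\mathcal{I}(\prec)$ is an $\omega$-continuous domain and an effective quasi-Polish space. A computable homeomorphism is a homeomorphism such that preimages of basic open sets under it and its inverse are uniformly c.e. unions of basic open sets. *)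

theory Defs
  imports "HOL-Analysis.Analysis"
begin

datatype recf = Zero | Succ | Proj nat | Comp recf "recf list" | Prec recf recf | Mu recf

inductive eval :: "recf \<Rightarrow> nat list \<Rightarrow> nat \<Rightarrow> bool" where
  eval_Zero: "eval Zero xs 0"
| eval_Succ: "eval Succ (x # xs) (Suc x)"
| eval_Proj: "i < length xs \<Longrightarrow> eval (Proj i) xs (xs ! i)"
| eval_Comp: "list_all2 (\<lambda>g y. eval g xs y) gs ys \<Longrightarrow> eval f ys z \<Longrightarrow> eval (Comp f gs) xs z"
| eval_Prec0: "eval f xs y \<Longrightarrow> eval (Prec f g) (0 # xs) y"
| eval_PrecS: "eval (Prec f g) (n # xs) y \<Longrightarrow> eval g (n # y # xs) z
                 \<Longrightarrow> eval (Prec f g) (Suc n # xs) z"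
| eval_Mu: "eval f (n # xs) 0 \<Longrightarrow> (\<forall>m<n. \<exists>k. eval f (m # xs) (Suc k))
                 \<Longrightarrow> eval (Mu f) xs n"

definition ce_rel :: "(nat \<Rightarrow> nat \<Rightarrow> bool) \<Rightarrow> bool" where
  "ce_rel R \<longleftrightarrow> (\<exists>f. \<forall>x y. R x y \<longleftrightarrow> (\<exists>z. eval f [x, y] z))"

definition uniformly_ce_rels :: "(nat \<Rightarrow> nat \<Rightarrow> nat \<Rightarrow> bool) \<Rightarrow> bool" where
  "uniformly_ce_rels Rs \<longleftrightarrow> (\<exists>f. \<forall>i x y. Rs i x y \<longleftrightarrow> (\<exists>z. eval f [i, x, y] z))"

definition directed_in :: "(nat \<Rightarrow> nat \<Rightarrow> bool) \<Rightarrow> nat set \<Rightarrow> bool" where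
  "directed_in R A \<longleftrightarrow> A \<noteq> {} \<and> (\<forall>x\<in>A. \<forall>y\<in>A. \<exists>z\<in>A. R x z \<and> R y z)"

definition interpolable :: "(nat \<Rightarrow> nat \<Rightarrow> bool) \<Rightarrow> bool" where
  "interpolable R \<longleftrightarrow> (\<forall>y. directed_in R {x. R x y})"

definition is_ideal :: "(nat \<Rightarrow> nat \<Rightarrow> bool) \<Rightarrow> nat set \<Rightarrow> bool" where
  "is_ideal R I \<longleftrightarrow> directed_in R I \<and> (\<forall>x y. y \<in> I \<longrightarrow> R x y \<longrightarrow> x \<in> I)"

definition ideals :: "(nat \<Rightarrow> nat \<Rightarrow> bool) \<Rightarrow> nat set set" where
  "ideals R = {I. is_ideal R I}"

definition basic_open :: "(nat \<Rightarrow> nat \<Rightarrow> bool) \<Rightarrow> nat \<Rightarrow> nat set set" where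
  "basic_open R n = {I \<in> ideals R. n \<in> I}"

definition ideal_space :: "(nat \<Rightarrow> nat \<Rightarrow> bool) \<Rightarrow> nat set topology" where
  "ideal_space R = topology_generated_by (range (basic_open R))"

definition ce_preimages :: "(nat \<Rightarrow> nat \<Rightarrow> bool) \<Rightarrow> (nat \<Rightarrow> nat \<Rightarrow> bool)
    \<Rightarrow> (nat set \<Rightarrow> nat set) \<Rightarrow> bool" where
  "ce_preimages R1 R2 h \<longleftrightarrow> (\<exists>W. ce_rel W \<and>
     (\<forall>n. {I \<in> ideals R1. h I \<in> basic_open R2 n} = (\<Union>m\<in>{m. W n m}. basic_open R1 m)))"

definition computably_homeomorphic :: "(nat \<Rightarrow> nat \<Rightarrow> bool) \<Rightarrow> (nat \<Rightarrow> nat \<Rightarrow> bool) \<Rightarrow> bool" where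
  "computably_homeomorphic R1 R2 \<longleftrightarrow> (\<exists>h g.
     homeomorphic_maps (ideal_space R1) (ideal_space R2) h g \<and>
     ce_preimages R1 R2 h \<and> ce_preimages R2 R1 g)"

end

theory Submission
  imports Defs "HOL-Library.Nat_Bijection"
begin

datatype expr = V nat | C nat | Sc expr | Ad expr expr | Sb expr expr | Ml expr expr
  | Sm expr expr | It expr expr expr | Lt expr expr

primrec iter :: "nat \<Rightarrow> nat \<Rightarrow> (nat \<Rightarrow> nat \<Rightarrow> nat) \<Rightarrow> nat" where
  "iter 0 b f = b"
| "iter (Suc k) b f = f k (iter k b f)"

fun den :: "expr \<Rightarrow> nat list \<Rightarrow> nat" where
  "den (V i) env = (if i < length env then env ! i else 0)"
| "den (C k) env = k"
| "den (Sc e) env = Suc (den e env)"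
| "den (Ad a b) env = den a env + den b env"
| "den (Sb a b) env = den a env - den b env"
| "den (Ml a b) env = den a env * den b env"
| "den (Sm m b) env = (\<Sum>i < den m env. den b (i # env))"
| "den (It m b s) env = iter (den m env) (den b env) (\<lambda>k r. den s (k # r # env))"
| "den (Lt v b) env = den b (den v env # env)"

primrec cst :: "nat \<Rightarrow> recf" where
  "cst 0 = Zero"
| "cst (Suc k) = Comp Succ [cst k]"

definition "ADD = Prec (Proj 0) (Comp Succ [Proj 1])"
definition "PRED = Prec Zero (Proj 0)"
definition "SUBR = Prec (Proj 0) (Comp PRED [Proj 1])"
definition "MUL = Prec Zero (Comp ADD [Proj 1, Proj 2])"

fun compile :: "nat \<Rightarrow> expr \<Rightarrow> recf" where
  "compile n (V i) = (if i < n then Proj i else Zero)"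
| "compile n (C k) = cst k"
| "compile n (Sc e) = Comp Succ [compile n e]"
| "compile n (Ad a b) = Comp ADD [compile n a, compile n b]"
| "compile n (Sb a b) = Comp SUBR [compile n b, compile n a]"
| "compile n (Ml a b) = Comp MUL [compile n a, compile n b]"
| "compile n (Sm m b) = Comp (Prec Zero (Comp ADD [Proj 1,
      Comp (compile (Suc n) b) (Proj 0 # map (\<lambda>j. Proj (j+2)) [0..<n])]))
      (compile n m # map Proj [0..<n])"
| "compile n (It m b s) = Comp (Prec (compile n b) (compile (Suc (Suc n)) s))
      (compile n m # map Proj [0..<n])"
| "compile n (Lt v b) = Comp (compile (Suc n) b) (compile n v # map Proj [0..<n])"

lemma eval_Succ1: "eval Succ [x] (Suc x)"
  using eval_Succ[of x "[]"] by simp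

lemma eval_cst: "eval (cst k) xs k"
proof (induct k)
  case 0 then show ?case by (simp add: eval_Zero)
next
  case (Suc k)
  have "eval (Comp Succ [cst k]) xs (Suc k)"
    by (rule eval_Comp[of _ _ "[k]"]) (auto simp: Suc eval_Succ1)
  then show ?case by simp
qed

lemma eval_Comp1: "eval g xs y \<Longrightarrow> eval f [y] z \<Longrightarrow> eval (Comp f [g]) xs z"
  by (rule eval_Comp[of _ _ "[y]"]) auto

lemma eval_Comp2: "eval g1 xs y1 \<Longrightarrow> eval g2 xs y2 \<Longrightarrow> eval f [y1, y2] z \<Longrightarrow> eval (Comp f [g1, g2]) xs z"
  by (rule eval_Comp[of _ _ "[y1, y2]"]) auto

lemma eval_Prec_iter:
  assumes "eval F env b" "\<And>k r. eval G (k # r # env) (s k r)"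
  shows "eval (Prec F G) (k # env) (iter k b s)"
  by (induct k) (auto intro: eval_Prec0 eval_PrecS assms)

lemma eval_Proj': "i < length xs \<Longrightarrow> y = xs ! i \<Longrightarrow> eval (Proj i) xs y"
  using eval_Proj by simp

lemma eval_ADD: "eval ADD [n, m] (n + m)"
proof -
  have "eval ADD [n, m] (iter n m (\<lambda>k r. Suc r))"
    unfolding ADD_def
    by (rule eval_Prec_iter) (auto intro!: eval_Proj' eval_Comp1 eval_Succ1)
  moreover have "iter n m (\<lambda>k r. Suc r) = n + m" by (induct n) auto
  ultimately show ?thesis by simp
qed

lemma eval_PRED: "eval PRED [n] (n - 1)"
proof -
  have "eval PRED [n] (iter n 0 (\<lambda>k r. k))"
    unfolding PRED_def
    by (rule eval_Prec_iter) (auto intro!: eval_Proj' eval_Zero)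
  moreover have "iter n 0 (\<lambda>k r. k) = n - 1" by (cases n) auto
  ultimately show ?thesis by simp
qed

lemma eval_SUBR: "eval SUBR [m, n] (n - m)"
proof -
  have "eval SUBR [m, n] (iter m n (\<lambda>k r. r - 1))"
    unfolding SUBR_def
    by (rule eval_Prec_iter) (auto intro!: eval_Proj' eval_Comp1 eval_PRED[simplified])
  moreover have "iter m n (\<lambda>k r. r - 1) = n - m" by (induct m) auto
  ultimately show ?thesis by simp
qed

lemma eval_MUL: "eval MUL [n, m] (n * m)"
proof -
  have "eval MUL [n, m] (iter n 0 (\<lambda>k r. r + m))"
    unfolding MUL_def
    by (rule eval_Prec_iter) (auto intro!: eval_Proj' eval_Comp2 eval_ADD eval_Zero)
  moreover have "iter n 0 (\<lambda>k r. r + m) = n * m" by (induct n) auto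
  ultimately show ?thesis by simp
qed

lemma projs_all2: "list_all2 (\<lambda>g y. eval g env y) (map Proj [0..<length env]) env"
  by (auto simp: list_all2_conv_all_nth intro!: eval_Proj')

lemma projs2_all2: "list_all2 (\<lambda>g y. eval g (k # r # env) y) (map (\<lambda>j. Proj (j+2)) [0..<length env]) env"
  by (auto simp: list_all2_conv_all_nth intro!: eval_Proj')

lemma compile_correct: "length env = n \<Longrightarrow> eval (compile n e) env (den e env)"
proof (induct e arbitrary: n env)
  case (V i) then show ?case by (auto intro: eval_Proj' eval_Zero)
next
  case (C k) then show ?case by (simp add: eval_cst)
next
  case (Sc e) then show ?case by (auto intro!: eval_Comp1 eval_Succ1)
next
  case (Ad a b) then show ?case by (auto intro!: eval_Comp2 eval_ADD)
next
  case (Sb a b) then show ?case by (auto intro!: eval_Comp2 eval_SUBR)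
next
  case (Ml a b) then show ?case by (auto intro!: eval_Comp2 eval_MUL)
next
  case (Sm m b)
  have st: "eval (Comp ADD [Proj 1, Comp (compile (Suc n) b) (Proj 0 # map (\<lambda>j. Proj (j+2)) [0..<n])])
      (k # r # env) (r + den b (k # env))" for k r
    apply (rule eval_Comp2[OF _ _ eval_ADD])
     apply (rule eval_Proj'; simp)
    apply (rule eval_Comp[of _ _ "k # env"])
     apply (simp add: Sm(3)[symmetric])
     apply (rule conjI, rule eval_Proj', simp, simp)
    using projs2_all2[of k r env] apply simp
    using Sm(2)[of "k # env" "Suc n"] Sm(3) by simp
  have "eval (Prec Zero (Comp ADD [Proj 1, Comp (compile (Suc n) b) (Proj 0 # map (\<lambda>j. Proj (j+2)) [0..<n])]))
      (den m env # env) (iter (den m env) 0 (\<lambda>k r. r + den b (k # env)))"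
    by (rule eval_Prec_iter[OF eval_Zero st])
  moreover have "iter q 0 (\<lambda>k r. r + den b (k # env)) = (\<Sum>i<q. den b (i # env))" for q
    by (induct q) auto
  ultimately have "eval (Prec Zero (Comp ADD [Proj 1, Comp (compile (Suc n) b) (Proj 0 # map (\<lambda>j. Proj (j+2)) [0..<n])]))
      (den m env # env) (den (Sm m b) env)" by simp
  then show ?case
    apply simp
    apply (rule eval_Comp[of _ _ "den m env # env"])
    using Sm projs_all2[of env] by auto
next
  case (It m b s)
  have "eval (Prec (compile n b) (compile (Suc (Suc n)) s)) (den m env # env) (den (It m b s) env)"
    apply (simp only: den.simps)
    apply (rule eval_Prec_iter)
    using It(2)[of env n] It(3)[of "k # r # env" "Suc (Suc n)" for k r] It(4) by auto
  then show ?case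
    apply simp
    apply (rule eval_Comp[of _ _ "den m env # env"])
    using It projs_all2[of env] by auto
next
  case (Lt v b)
  show ?case
    apply simp
    apply (rule eval_Comp[of _ _ "den v env # env"])
    using Lt(1)[of env n] Lt(2)[of "den v env # env" "Suc n"] Lt(3) projs_all2[of env] by auto
qed

lemma eval_det: "eval f xs y \<Longrightarrow> eval f xs y' \<Longrightarrow> y' = y"
proof (induct arbitrary: y' rule: eval.induct)
  case (eval_Comp xs gs ys f z)
  from eval_Comp(4) obtain ys' where a: "list_all2 (\<lambda>g y. eval g xs y) gs ys'" and b: "eval f ys' y'"
    by (cases rule: eval.cases) auto
  have "ys' = ys" using eval_Comp(1) a
  proof (induct arbitrary: ys' rule: list_all2_induct)
    case Nil then show ?case by simp
  next
    case (Cons g gs y ys) then show ?case by (cases ys') auto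
  qed
  then show ?case using eval_Comp(3) b by simp
next
  case (eval_Mu f n xs)
  from eval_Mu(4) obtain n' where n': "y' = n'" "eval f (n' # xs) 0" "\<forall>m<n'. \<exists>k. eval f (m # xs) (Suc k)"
    by (cases rule: eval.cases) auto
  show ?case
  proof (rule ccontr)
    assume "y' \<noteq> n"
    then have "n < n' \<or> n' < n" using n' by auto
    then show False
    proof
      assume "n < n'" then obtain k where "eval f (n # xs) (Suc k)" using n' by auto
      then show False using eval_Mu(2) by fastforce
    next
      assume "n' < n" then obtain k where "eval f (n' # xs) (Suc k) \<and> (\<forall>y'. eval f (n' # xs) y' \<longrightarrow> y' = Suc k)"
        using eval_Mu(3) by blast
      then show False using n' by fastforce
    qed
  qed
next
  case (eval_Zero xs) from eval_Zero(1) show ?case by (cases rule: eval.cases) auto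
next
  case (eval_Succ x xs) from eval_Succ(1) show ?case by (cases rule: eval.cases) auto
next
  case (eval_Proj i xs) from eval_Proj(2) show ?case by (cases rule: eval.cases) auto
next
  case (eval_Prec0 f xs y g) from eval_Prec0(3) show ?case using eval_Prec0(2) by (cases rule: eval.cases) auto
next
  case (eval_PrecS f g n xs y z)
  from eval_PrecS(5) obtain y2 where "eval (Prec f g) (n # xs) y2" "eval g (n # y2 # xs) y'"
    by (cases rule: eval.cases) auto
  then show ?case using eval_PrecS(2,4) by auto
qed

lemma eval_compile_iff: "length env = n \<Longrightarrow> eval (compile n e) env y \<longleftrightarrow> y = den e env"
  using compile_correct eval_det by blast

lemma eval_Mu_compile:
  assumes "length env = n"
  shows "(\<exists>z. eval (Mu (compile (Suc n) p)) env z) \<longleftrightarrow> (\<exists>w. den p (w # env) = 0)"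
proof
  assume "\<exists>z. eval (Mu (compile (Suc n) p)) env z"
  then obtain z where "eval (Mu (compile (Suc n) p)) env z" by blast
  then have "eval (compile (Suc n) p) (z # env) 0" by (cases rule: eval.cases) auto
  then show "\<exists>w. den p (w # env) = 0" using eval_compile_iff assms by auto
next
  assume "\<exists>w. den p (w # env) = 0"
  then obtain w where w: "den p (w # env) = 0" "\<forall>m<w. den p (m # env) \<noteq> 0"
    using exists_least_iff[of "\<lambda>w. den p (w # env) = 0"] by blast
  have "eval (Mu (compile (Suc n) p)) env w"
  proof (rule eval_Mu)
    show "eval (compile (Suc n) p) (w # env) 0" using w assms compile_correct[of "w # env" "Suc n" p] by simp
    show "\<forall>m<w. \<exists>k. eval (compile (Suc n) p) (m # env) (Suc k)"
    proof (intro allI impI)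
      fix m assume "m < w"
      then have "den p (m # env) \<noteq> 0" using w by auto
      then obtain k where "den p (m # env) = Suc k" using not0_implies_Suc by blast
      then show "\<exists>k. eval (compile (Suc n) p) (m # env) (Suc k)"
        using assms compile_correct[of "m # env" "Suc n" p] by auto
    qed
  qed
  then show "\<exists>z. eval (Mu (compile (Suc n) p)) env z" by blast
qed

fun sh :: "nat \<Rightarrow> expr \<Rightarrow> expr" where
  "sh c (V i) = (if i < c then V i else V (Suc i))"
| "sh c (C k) = C k"
| "sh c (Sc e) = Sc (sh c e)"
| "sh c (Ad a b) = Ad (sh c a) (sh c b)"
| "sh c (Sb a b) = Sb (sh c a) (sh c b)"
| "sh c (Ml a b) = Ml (sh c a) (sh c b)"
| "sh c (Sm m b) = Sm (sh c m) (sh (Suc c) b)"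
| "sh c (It m b s) = It (sh c m) (sh c b) (sh (Suc (Suc c)) s)"
| "sh c (Lt v b) = Lt (sh c v) (sh (Suc c) b)"

lemma den_sh: "c \<le> length env \<Longrightarrow> den (sh c e) (take c env @ x # drop c env) = den e env"
proof (induct e arbitrary: c env)
  case (V i)
  then show ?case by (auto simp: nth_append min_def nth_Cons' split: if_splits)
next
  case (Sm m b)
  have "den (sh (Suc c) b) (i # take c env @ x # drop c env) = den b (i # env)" for i
    using Sm(2)[of "Suc c" "i # env"] Sm(3) by simp
  then show ?case using Sm by simp
next
  case (It m b s)
  have "den (sh (Suc (Suc c)) s) (k # r # take c env @ x # drop c env) = den s (k # r # env)" for k r
    using It(3)[of "Suc (Suc c)" "k # r # env"] It(4) by simp
  then show ?case using It by simp
next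
  case (Lt v b)
  have "den (sh (Suc c) b) (y # take c env @ x # drop c env) = den b (y # env)" for y
    using Lt(2)[of "Suc c" "y # env"] Lt(3) by simp
  then show ?case using Lt by simp
qed auto

definition lift :: "expr \<Rightarrow> expr" where "lift e = sh 0 e"

lemma den_lift[simp]: "den (lift e) (x # env) = den e env"
  using den_sh[of 0 env e x] by (simp add: lift_def)

definition lift2 :: "expr \<Rightarrow> expr" where "lift2 e = lift (lift e)"
lemma den_lift2[simp]: "den (lift2 e) (x # y # env) = den e env"
  by (simp add: lift2_def)

definition "eNOT a = Sb (C 1) a"
definition "eSG a = eNOT (eNOT a)"
definition "eAND a b = Ml (eSG a) (eSG b)"
definition "eOR a b = eSG (Ad a b)"
definition "eEQ a b = eNOT (Ad (Sb a b) (Sb b a))"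
definition "eLE a b = eNOT (Sb a b)"
definition "eLT a b = eLE (Sc a) b"
definition "eEX n body = eSG (Sm n body)"
definition "eALL n body = eNOT (eEX n (eNOT body))"
definition "eIF c a b = Ad (Ml (eSG c) a) (Ml (eNOT c) b)"
definition "eIMP a b = eOR (eNOT a) b"

lemma den_NOT[simp]: "den (eNOT a) env = of_bool (den a env = 0)"
  by (simp add: eNOT_def)
lemma den_SG[simp]: "den (eSG a) env = of_bool (den a env \<noteq> 0)"
  by (simp add: eSG_def)
lemma den_AND[simp]: "den (eAND a b) env = of_bool (den a env \<noteq> 0 \<and> den b env \<noteq> 0)"
  by (simp add: eAND_def)
lemma den_OR[simp]: "den (eOR a b) env = of_bool (den a env \<noteq> 0 \<or> den b env \<noteq> 0)"
  by (simp add: eOR_def)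
lemma den_EQ[simp]: "den (eEQ a b) env = of_bool (den a env = den b env)"
  by (simp add: eEQ_def)
lemma den_LE[simp]: "den (eLE a b) env = of_bool (den a env \<le> den b env)"
  by (simp add: eLE_def)
lemma den_LT[simp]: "den (eLT a b) env = of_bool (den a env < den b env)"
  by (simp add: eLT_def)
lemma den_EX[simp]: "den (eEX n body) env = of_bool (\<exists>i < den n env. den body (i # env) \<noteq> 0)"
  by (simp add: eEX_def)
lemma den_ALL[simp]: "den (eALL n body) env = of_bool (\<forall>i < den n env. den body (i # env) \<noteq> 0)"
  by (simp add: eALL_def)
lemma den_IF[simp]: "den (eIF c a b) env = (if den c env \<noteq> 0 then den a env else den b env)"
  by (simp add: eIF_def)
lemma den_IMP[simp]: "den (eIMP a b) env = of_bool (den a env \<noteq> 0 \<longrightarrow> den b env \<noteq> 0)"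
  by (simp add: eIMP_def)

definition "eTRI n = Sm (Sc n) (V 0)"
lemma sum_lessThan_id: "(\<Sum>i<Suc n. i) = triangle n"
  by (induct n) auto
lemma den_TRI[simp]: "den (eTRI n) env = triangle (den n env)"
  by (simp del: sum.lessThan_Suc add: eTRI_def sum_lessThan_id)

definition "ePE a b = Ad (eTRI (Ad a b)) a"
lemma den_PE[simp]: "den (ePE a b) env = prod_encode (den a env, den b env)"
  by (simp add: ePE_def prod_encode_def)

definition "eWW p = Sm p (eLE (eTRI (Sc (V 0))) (lift p))"
definition "ePF p = Lt (eWW p) (Sb (lift p) (eTRI (V 0)))"
definition "ePS p = Lt (eWW p) (Sb (V 0) (Sb (lift p) (eTRI (V 0))))"

lemma sum_of_bool_card: "(\<Sum>i<(n::nat). of_bool (P i) :: nat) = card {i. i < n \<and> P i}"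
proof (induct n)
  case 0 then show ?case by simp
next
  case (Suc n)
  have e: "{i. i < Suc n \<and> P i} = {i. i < n \<and> P i} \<union> {i. i = n \<and> P i}" by auto
  have "card {i. i < Suc n \<and> P i} = card {i. i < n \<and> P i} + card {i. i = n \<and> P i}"
    unfolding e by (rule card_Un_disjoint) auto
  moreover have "card {i. i = n \<and> P i} = of_bool (P n)"
  proof (cases "P n")
    case True then have "{i. i = n \<and> P i} = {n}" by auto
    then show ?thesis using True by simp
  qed auto
  ultimately show ?case using Suc by simp
qed

lemma triangle_mono: "a \<le> b \<Longrightarrow> triangle a \<le> triangle b"
  by (induct b) (auto simp: le_Suc_eq)

lemma triangle_ge: "n \<le> triangle n"
  by (induct n) auto

lemma WW_val: "card {i. i < prod_encode (a, b) \<and> triangle (Suc i) \<le> prod_encode (a, b)} = a + b"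
proof -
  let ?p = "prod_encode (a, b)"
  have p: "?p = triangle (a + b) + a" by (simp add: prod_encode_def)
  have "{i. i < ?p \<and> triangle (Suc i) \<le> ?p} = {i. i < a + b}"
  proof (intro set_eqI iffI)
    fix i assume "i \<in> {i. i < ?p \<and> triangle (Suc i) \<le> ?p}"
    then have "triangle (Suc i) \<le> triangle (a + b) + a" using p by simp
    then have "Suc i \<le> a + b"
    proof (rule contrapos_pp)
      assume "\<not> Suc i \<le> a + b"
      then have "Suc (a + b) \<le> Suc i" by simp
      then have "triangle (Suc (a + b)) \<le> triangle (Suc i)" by (rule triangle_mono)
      then show "\<not> triangle (Suc i) \<le> triangle (a + b) + a" by simp
    qed
    then show "i \<in> {i. i < a + b}" by simp
  next
    fix i assume "i \<in> {i. i < a + b}"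
    then have "Suc i \<le> a + b" by simp
    then have "triangle (Suc i) \<le> triangle (a + b)" by (rule triangle_mono)
    moreover have "i < ?p" using \<open>i \<in> {i. i < a + b}\<close> p triangle_ge[of "a+b"] by simp
    ultimately show "i \<in> {i. i < ?p \<and> triangle (Suc i) \<le> ?p}" using p by simp
  qed
  then show ?thesis by simp
qed

lemma den_WW: "den (eWW p) env = fst (prod_decode (den p env)) + snd (prod_decode (den p env))"
proof -
  obtain a b where ab: "prod_decode (den p env) = (a, b)" by force
  then have pe: "den p env = prod_encode (a, b)"
    by (metis prod_decode_inverse)
  show ?thesis unfolding eWW_def using WW_val[of a b] ab pe
    by (simp add: sum_of_bool_card)
qed

lemma den_PF[simp]: "den (ePF p) env = fst (prod_decode (den p env))"
proof -
  obtain a b where ab: "prod_decode (den p env) = (a, b)" by force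
  then have pe: "den p env = prod_encode (a, b)" by (metis prod_decode_inverse)
  show ?thesis unfolding ePF_def using ab pe den_WW[of p env] by (simp add: prod_encode_def)
qed

lemma den_PS[simp]: "den (ePS p) env = snd (prod_decode (den p env))"
proof -
  obtain a b where ab: "prod_decode (den p env) = (a, b)" by force
  then have pe: "den p env = prod_encode (a, b)" by (metis prod_decode_inverse)
  show ?thesis unfolding ePS_def using ab pe den_WW[of p env] by (simp add: prod_encode_def)
qed

definition pfst :: "nat \<Rightarrow> nat" where "pfst p = fst (prod_decode p)"
definition psnd :: "nat \<Rightarrow> nat" where "psnd p = snd (prod_decode p)"
lemma pfst_pe[simp]: "pfst (prod_encode (a, b)) = a" by (simp add: pfst_def)
lemma psnd_pe[simp]: "psnd (prod_encode (a, b)) = b" by (simp add: psnd_def)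

definition hdc :: "nat \<Rightarrow> nat" where "hdc l = pfst (l - 1)"
definition tlc :: "nat \<Rightarrow> nat" where "tlc l = psnd (l - 1)"
definition nthc :: "nat \<Rightarrow> nat \<Rightarrow> nat" where "nthc l k = hdc ((tlc ^^ k) l)"
definition lenc :: "nat \<Rightarrow> nat" where "lenc l = length (list_decode l)"
definition consc :: "nat \<Rightarrow> nat \<Rightarrow> nat" where "consc a l = Suc (prod_encode (a, l))"

lemma hdc_Suc[simp]: "hdc (Suc (prod_encode (a, b))) = a" by (simp add: hdc_def)
lemma tlc_Suc[simp]: "tlc (Suc (prod_encode (a, b))) = b" by (simp add: tlc_def)
lemma hdc_enc[simp]: "hdc (list_encode (x # xs)) = x" by (simp add: hdc_def)
lemma tlc_enc[simp]: "tlc (list_encode (x # xs)) = list_encode xs" by (simp add: tlc_def)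
lemma tlc_0[simp]: "tlc 0 = 0"
  by (simp add: tlc_def psnd_def prod_decode_def prod_decode_aux.simps)

lemma tlc_pow: "(tlc ^^ k) (list_encode xs) = list_encode (drop k xs)"
proof (induct k arbitrary: xs)
  case 0 then show ?case by simp
next
  case (Suc k)
  show ?case
  proof (cases xs)
    case Nil
    have "(tlc ^^ k) 0 = 0" by (induct k) auto
    then show ?thesis using Nil by (simp add: funpow_swap1)
  next
    case (Cons y ys)
    then show ?thesis using Suc by (simp del: funpow.simps add: funpow_Suc_right)
  qed
qed

lemma nthc_enc[simp]: "k < length xs \<Longrightarrow> nthc (list_encode xs) k = xs ! k"
  by (simp add: nthc_def tlc_pow Cons_nth_drop_Suc[symmetric])

lemma consc_enc[simp]: "consc a (list_encode xs) = list_encode (a # xs)"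
  by (simp add: consc_def)

lemma length_le_enc: "length xs \<le> list_encode xs"
proof (induct xs)
  case (Cons x xs)
  then show ?case using le_prod_encode_2[of "list_encode xs" x] by simp
qed simp

lemma list_encode_0_iff: "list_encode xs = 0 \<longleftrightarrow> xs = []"
  by (cases xs) auto

definition "eHD l = ePF (Sb l (C 1))"
definition "eTL l = ePS (Sb l (C 1))"
definition "eTLN l k = It k l (eTL (V 1))"
definition "eNTH l k = eHD (eTLN l k)"
definition "eLEN l = Sm l (eSG (eTLN (lift l) (V 0)))"
definition "eCONS a l = Sc (ePE a l)"

lemma den_HD[simp]: "den (eHD l) env = hdc (den l env)"
  by (simp add: eHD_def hdc_def pfst_def)
lemma den_TL[simp]: "den (eTL l) env = tlc (den l env)"
  by (simp add: eTL_def tlc_def psnd_def)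
lemma iter_funpow: "iter k b (\<lambda>_ r. f r) = (f ^^ k) b"
  by (induct k) auto
lemma den_TLN[simp]: "den (eTLN l k) env = (tlc ^^ den k env) (den l env)"
  by (simp add: eTLN_def iter_funpow)
lemma den_NTH[simp]: "den (eNTH l k) env = nthc (den l env) (den k env)"
  by (simp add: eNTH_def nthc_def)
lemma den_CONS[simp]: "den (eCONS a l) env = consc (den a env) (den l env)"
  by (simp add: eCONS_def consc_def)

lemma den_LEN[simp]: "den (eLEN l) env = lenc (den l env)"
proof -
  obtain xs where xs: "den l env = list_encode xs" by (metis list_decode_inverse)
  have "den (eLEN l) env = card {i. i < list_encode xs \<and> list_encode (drop i xs) \<noteq> 0}"
    by (simp add: eLEN_def xs tlc_pow sum_of_bool_card)
  also have "{i. i < list_encode xs \<and> list_encode (drop i xs) \<noteq> 0} = {i. i < length xs}"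
    using length_le_enc[of xs] by (auto simp: list_encode_0_iff)
  finally show ?thesis by (simp add: lenc_def xs)
qed

fun code :: "recf \<Rightarrow> nat" where
  "code Zero = prod_encode (0, 0)"
| "code Succ = prod_encode (1, 0)"
| "code (Proj i) = prod_encode (2, i)"
| "code (Comp f gs) = prod_encode (3, prod_encode (code f, list_encode (map code gs)))"
| "code (Prec f g) = prod_encode (4, prod_encode (code f, code g))"
| "code (Mu f) = prod_encode (5, code f)"

definition ef :: "nat \<Rightarrow> nat" where "ef E = pfst E"
definition exs :: "nat \<Rightarrow> nat" where "exs E = pfst (psnd E)"
definition ez :: "nat \<Rightarrow> nat" where "ez E = psnd (psnd E)"
definition ent :: "nat \<Rightarrow> nat \<Rightarrow> nat \<Rightarrow> nat" where "ent f xs z = prod_encode (f, prod_encode (xs, z))"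

lemma ent_simps[simp]: "ef (ent f xs z) = f" "exs (ent f xs z) = xs" "ez (ent f xs z) = z"
  by (simp_all add: ef_def exs_def ez_def ent_def)

definition jstQ :: "((nat \<Rightarrow> bool) \<Rightarrow> bool) \<Rightarrow> nat \<Rightarrow> bool" where
  "jstQ Q E \<longleftrightarrow>
   (pfst (ef E) = 0 \<and> ez E = 0) \<or>
   (pfst (ef E) = 1 \<and> exs E \<noteq> 0 \<and> ez E = Suc (hdc (exs E))) \<or>
   (pfst (ef E) = 2 \<and> psnd (ef E) < lenc (exs E) \<and> ez E = nthc (exs E) (psnd (ef E))) \<or>
   (pfst (ef E) = 3 \<and> Q (\<lambda>E'. ef E' = pfst (psnd (ef E)) \<and> ez E' = ez E \<and>
        lenc (exs E') = lenc (psnd (psnd (ef E))) \<and>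
        (\<forall>k < lenc (psnd (psnd (ef E))). Q (\<lambda>E''. ef E'' = nthc (psnd (psnd (ef E))) k \<and>
             exs E'' = exs E \<and> ez E'' = nthc (exs E') k)))) \<or>
   (pfst (ef E) = 4 \<and> exs E \<noteq> 0 \<and> hdc (exs E) = 0 \<and>
      Q (\<lambda>E'. ef E' = pfst (psnd (ef E)) \<and> exs E' = tlc (exs E) \<and> ez E' = ez E)) \<or>
   (pfst (ef E) = 4 \<and> exs E \<noteq> 0 \<and> hdc (exs E) \<noteq> 0 \<and>
      Q (\<lambda>E'. ef E' = ef E \<and> exs E' = consc (hdc (exs E) - 1) (tlc (exs E)) \<and>
        Q (\<lambda>E''. ef E'' = psnd (psnd (ef E)) \<and>
           exs E'' = consc (hdc (exs E) - 1) (consc (ez E') (tlc (exs E))) \<and> ez E'' = ez E))) \<or>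
   (pfst (ef E) = 5 \<and> Q (\<lambda>E'. ef E' = psnd (ef E) \<and> exs E' = consc (ez E) (exs E) \<and> ez E' = 0) \<and>
      (\<forall>m < ez E. Q (\<lambda>E'. ef E' = psnd (ef E) \<and> exs E' = consc m (exs E) \<and> ez E' \<noteq> 0)))"

lemma jstQ_mono:
  assumes "jstQ Q E" "\<And>P. Q P \<Longrightarrow> Q' P" "\<And>P P'. (\<And>x. P x \<Longrightarrow> P' x) \<Longrightarrow> Q P \<Longrightarrow> Q P'"
  shows "jstQ Q' E"
proof -
  have m: "Q P \<Longrightarrow> (\<And>x. P x \<Longrightarrow> P' x) \<Longrightarrow> Q' P'" for P P' using assms(2,3) by blast
  show ?thesis using assms(1) unfolding jstQ_def
    apply (elim disjE)
          apply simp
         apply simp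
        apply simp
       apply (rule disjI2, rule disjI2, rule disjI2, rule disjI1)
       apply (elim conjE, rule conjI, assumption)
       apply (erule m) apply (elim conjE, intro conjI, assumption+)
       apply (intro allI impI) apply (erule allE, erule impE, assumption) apply (erule m, assumption)
      apply (rule disjI2, rule disjI2, rule disjI2, rule disjI2, rule disjI1)
      apply (elim conjE, intro conjI, assumption+) apply (erule m, assumption)
     apply (rule disjI2, rule disjI2, rule disjI2, rule disjI2, rule disjI2, rule disjI1)
     apply (elim conjE, intro conjI, assumption+)
     apply (erule m) apply (elim conjE, intro conjI, assumption+) apply (erule m, assumption)
    apply (rule disjI2, rule disjI2, rule disjI2, rule disjI2, rule disjI2, rule disjI2)
    apply (elim conjE, intro conjI, assumption)
     apply (erule m, assumption)
    apply (intro allI impI) apply (erule allE, erule impE, assumption) apply (erule m, assumption)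
    done
qed

lemma jstQ_tag5: "jstQ Q E \<Longrightarrow> pfst (ef E) = 5 \<Longrightarrow>
  Q (\<lambda>E'. ef E' = psnd (ef E) \<and> exs E' = consc (ez E) (exs E) \<and> ez E' = 0) \<and>
      (\<forall>m < ez E. Q (\<lambda>E'. ef E' = psnd (ef E) \<and> exs E' = consc m (exs E) \<and> ez E' \<noteq> 0))"
  unfolding jstQ_def by simp

lemma jstQ_tag4: "jstQ Q E \<Longrightarrow> pfst (ef E) = 4 \<Longrightarrow> exs E \<noteq> 0 \<and>
   (hdc (exs E) = 0 \<longrightarrow> Q (\<lambda>E'. ef E' = pfst (psnd (ef E)) \<and> exs E' = tlc (exs E) \<and> ez E' = ez E)) \<and>
   (hdc (exs E) \<noteq> 0 \<longrightarrow> Q (\<lambda>E'. ef E' = ef E \<and> exs E' = consc (hdc (exs E) - 1) (tlc (exs E)) \<and>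
        Q (\<lambda>E''. ef E'' = psnd (psnd (ef E)) \<and>
           exs E'' = consc (hdc (exs E) - 1) (consc (ez E') (tlc (exs E))) \<and> ez E'' = ez E)))"
  unfolding jstQ_def by auto

lemma jstQ_I0: "pfst (ef E) = 0 \<Longrightarrow> ez E = 0 \<Longrightarrow> jstQ Q E" unfolding jstQ_def by simp
lemma jstQ_I1: "pfst (ef E) = 1 \<Longrightarrow> exs E \<noteq> 0 \<Longrightarrow> ez E = Suc (hdc (exs E)) \<Longrightarrow> jstQ Q E"
  unfolding jstQ_def by simp
lemma jstQ_I2: "pfst (ef E) = 2 \<Longrightarrow> psnd (ef E) < lenc (exs E) \<Longrightarrow> ez E = nthc (exs E) (psnd (ef E)) \<Longrightarrow> jstQ Q E"
  unfolding jstQ_def by simp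
lemma jstQ_I3: "pfst (ef E) = 3 \<Longrightarrow> Q (\<lambda>E'. ef E' = pfst (psnd (ef E)) \<and> ez E' = ez E \<and>
        lenc (exs E') = lenc (psnd (psnd (ef E))) \<and>
        (\<forall>k < lenc (psnd (psnd (ef E))). Q (\<lambda>E''. ef E'' = nthc (psnd (psnd (ef E))) k \<and>
             exs E'' = exs E \<and> ez E'' = nthc (exs E') k))) \<Longrightarrow> jstQ Q E"
  unfolding jstQ_def by simp
lemma jstQ_I4a: "pfst (ef E) = 4 \<Longrightarrow> exs E \<noteq> 0 \<Longrightarrow> hdc (exs E) = 0 \<Longrightarrow>
      Q (\<lambda>E'. ef E' = pfst (psnd (ef E)) \<and> exs E' = tlc (exs E) \<and> ez E' = ez E) \<Longrightarrow> jstQ Q E"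
  unfolding jstQ_def by simp
lemma jstQ_I4b: "pfst (ef E) = 4 \<Longrightarrow> exs E \<noteq> 0 \<Longrightarrow> hdc (exs E) \<noteq> 0 \<Longrightarrow>
      Q (\<lambda>E'. ef E' = ef E \<and> exs E' = consc (hdc (exs E) - 1) (tlc (exs E)) \<and>
        Q (\<lambda>E''. ef E'' = psnd (psnd (ef E)) \<and>
           exs E'' = consc (hdc (exs E) - 1) (consc (ez E') (tlc (exs E))) \<and> ez E'' = ez E)) \<Longrightarrow> jstQ Q E"
  unfolding jstQ_def by simp
lemma jstQ_I5: "pfst (ef E) = 5 \<Longrightarrow> Q (\<lambda>E'. ef E' = psnd (ef E) \<and> exs E' = consc (ez E) (exs E) \<and> ez E' = 0) \<Longrightarrow>
      (\<forall>m < ez E. Q (\<lambda>E'. ef E' = psnd (ef E) \<and> exs E' = consc m (exs E) \<and> ez E' \<noteq> 0)) \<Longrightarrow> jstQ Q E"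
  unfolding jstQ_def by simp

definition validL :: "nat list \<Rightarrow> bool" where
  "validL Ls \<longleftrightarrow> (\<forall>i < length Ls. jstQ (\<lambda>P. \<exists>E\<in>set (take i Ls). P E) (Ls ! i))"

lemma validL_Nil: "validL []" by (simp add: validL_def)

lemma Qset_mono: "A \<subseteq> B \<Longrightarrow> jstQ (\<lambda>P. \<exists>E\<in>A. P E) e \<Longrightarrow> jstQ (\<lambda>P. \<exists>E\<in>B. P E) e"
  by (erule jstQ_mono) blast+

lemma validL_append: "validL A \<Longrightarrow> validL B \<Longrightarrow> validL (A @ B)"
  unfolding validL_def
proof (intro allI impI)
  fix i assume a: "\<forall>i<length A. jstQ (\<lambda>P. \<exists>E\<in>set (take i A). P E) (A ! i)"
    and b: "\<forall>i<length B. jstQ (\<lambda>P. \<exists>E\<in>set (take i B). P E) (B ! i)"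
    and i: "i < length (A @ B)"
  show "jstQ (\<lambda>P. \<exists>E\<in>set (take i (A @ B)). P E) ((A @ B) ! i)"
  proof (cases "i < length A")
    case True then show ?thesis using a by (simp add: nth_append)
  next
    case False
    then have "i - length A < length B" using i by simp
    then have "jstQ (\<lambda>P. \<exists>E\<in>set (take (i - length A) B). P E) (B ! (i - length A))" using b by simp
    moreover have "set (take (i - length A) B) \<subseteq> set (take i (A @ B))" using False by auto
    ultimately have "jstQ (\<lambda>P. \<exists>E\<in>set (take i (A @ B)). P E) (B ! (i - length A))"
      by (rule Qset_mono[rotated])
    then show ?thesis using False by (simp add: nth_append)
  qed
qed

lemma validL_snoc: "validL A \<Longrightarrow> jstQ (\<lambda>P. \<exists>E\<in>set A. P E) e \<Longrightarrow> validL (A @ [e])"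
  unfolding validL_def by (auto simp: nth_append less_Suc_eq)

lemma validL_concat: "(\<And>x. x \<in> set xs \<Longrightarrow> validL (F x)) \<Longrightarrow> validL (concat (map F xs))"
  by (induct xs) (auto simp: validL_Nil validL_append)

lemma lenc_enc[simp]: "lenc (list_encode xs) = length xs" by (simp add: lenc_def)
lemma list_encode_map_nth: "k < length gs \<Longrightarrow> nthc (list_encode (map code gs)) k = code (gs ! k)"
  by simp

lemma list_decode_consc[simp]: "list_decode (consc a l) = a # list_decode l"
proof -
  obtain xs where "l = list_encode xs" by (metis list_decode_inverse)
  then show ?thesis by simp
qed

lemma list_decode_nonzero: "l \<noteq> 0 \<Longrightarrow> list_decode l = hdc l # list_decode (tlc l)"
proof -
  assume "l \<noteq> 0"
  obtain xs where xs: "l = list_encode xs" by (metis list_decode_inverse)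
  then obtain y ys where "xs = y # ys" using \<open>l \<noteq> 0\<close> by (cases xs) auto
  then show ?thesis using xs by simp
qed

lemma validL_sound:
  assumes v: "validL Ls"
  shows "i < length Ls \<Longrightarrow> ef (Ls ! i) = code f \<Longrightarrow> eval f (list_decode (exs (Ls ! i))) (ez (Ls ! i))"
proof (induct i arbitrary: f rule: less_induct)
  case (less i)
  let ?E = "Ls ! i"
  let ?xs = "list_decode (exs ?E)"
  have J: "jstQ (\<lambda>P. \<exists>E\<in>set (take i Ls). P E) ?E" using v less(2) by (simp add: validL_def)
  have IH: "E \<in> set (take i Ls) \<Longrightarrow> ef E = code g \<Longrightarrow> eval g (list_decode (exs E)) (ez E)" for E g
  proof -
    assume "E \<in> set (take i Ls)" "ef E = code g"
    then obtain j where j: "j < i" "E = Ls ! j" using less(2)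
      by (auto simp: in_set_conv_nth)
    then show ?thesis using less(1)[of j g] less(2) \<open>ef E = code g\<close> by simp
  qed
  show ?case
  proof (cases f)
    case Zero
    then have "ez ?E = 0" using J less(3) by (simp add: jstQ_def)
    then show ?thesis using Zero by (simp add: eval_Zero)
  next
    case Succ
    then have "exs ?E \<noteq> 0 \<and> ez ?E = Suc (hdc (exs ?E))" using J less(3) by (simp add: jstQ_def)
    then show ?thesis using Succ by (auto simp: list_decode_nonzero intro: eval_Succ)
  next
    case (Proj k)
    then have "k < lenc (exs ?E) \<and> ez ?E = nthc (exs ?E) k" using J less(3) by (simp add: jstQ_def)
    moreover obtain xs where "exs ?E = list_encode xs" by (metis list_decode_inverse)
    ultimately show ?thesis using Proj by (auto intro: eval_Proj')
  next
    case (Comp g gs)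
    have "\<exists>E'\<in>set (take i Ls). ef E' = code g \<and> ez E' = ez ?E \<and> lenc (exs E') = length gs \<and>
      (\<forall>k<length gs. \<exists>E''\<in>set (take i Ls). ef E'' = code (gs ! k) \<and> exs E'' = exs ?E \<and> ez E'' = nthc (exs E') k)"
      using J less(3) Comp by (simp add: jstQ_def)
    then obtain E' where E': "E' \<in> set (take i Ls)" "ef E' = code g" "ez E' = ez ?E"
      "lenc (exs E') = length gs"
      "\<forall>k<length gs. \<exists>E''\<in>set (take i Ls). ef E'' = code (gs ! k) \<and> exs E'' = exs ?E \<and> ez E'' = nthc (exs E') k"
      by blast
    obtain ys where ys: "exs E' = list_encode ys" by (metis list_decode_inverse)
    have "list_all2 (\<lambda>g y. eval g ?xs y) gs ys"
    proof (rule list_all2_all_nthI)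
      show "length gs = length ys" using E'(4) ys by simp
      fix k assume k: "k < length gs"
      then obtain E'' where e: "E'' \<in> set (take i Ls)" "ef E'' = code (gs ! k)" "exs E'' = exs ?E" "ez E'' = nthc (exs E') k"
        using E'(5) by blast
      have "eval (gs ! k) (list_decode (exs E'')) (ez E'')" by (rule IH[OF e(1) e(2)])
      moreover have "nthc (exs E') k = ys ! k" using ys k E'(4) by simp
      ultimately show "eval (gs ! k) ?xs (ys ! k)" using e(3,4) by simp
    qed
    moreover have "eval g ys (ez ?E)" using IH[OF E'(1) E'(2)] E'(3) ys by simp
    ultimately show ?thesis using Comp eval_Comp by blast
  next
    case (Prec g h)
    have J4: "exs ?E \<noteq> 0 \<and>
   (hdc (exs ?E) = 0 \<longrightarrow> (\<exists>E'\<in>set (take i Ls). ef E' = code g \<and> exs E' = tlc (exs ?E) \<and> ez E' = ez ?E)) \<and>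
   (hdc (exs ?E) \<noteq> 0 \<longrightarrow> (\<exists>E'\<in>set (take i Ls). ef E' = code (Prec g h) \<and> exs E' = consc (hdc (exs ?E) - 1) (tlc (exs ?E)) \<and>
        (\<exists>E''\<in>set (take i Ls). ef E'' = code h \<and>
           exs E'' = consc (hdc (exs ?E) - 1) (consc (ez E') (tlc (exs ?E))) \<and> ez E'' = ez ?E)))"
      using jstQ_tag4[OF J] less(3) Prec by simp
    then have ne: "exs ?E \<noteq> 0" by blast
    obtain n rest where xs: "?xs = n # rest" "hdc (exs ?E) = n" "list_decode (tlc (exs ?E)) = rest"
      using list_decode_nonzero[OF ne] by auto
    show ?thesis
    proof (cases n)
      case 0
      then obtain E' where e: "E' \<in> set (take i Ls)" "ef E' = code g"
        "exs E' = tlc (exs ?E)" "ez E' = ez ?E" using J4 xs by auto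
      have "eval g (list_decode (exs E')) (ez E')" by (rule IH[OF e(1) e(2)])
      then have "eval g rest (ez ?E)" using e xs by simp
      then show ?thesis using Prec xs 0 by (simp add: eval_Prec0)
    next
      case (Suc m)
      then obtain E' E'' where e: "E' \<in> set (take i Ls)" "ef E' = code (Prec g h)"
        "exs E' = consc m (tlc (exs ?E))" "E'' \<in> set (take i Ls)" "ef E'' = code h"
        "exs E'' = consc m (consc (ez E') (tlc (exs ?E)))" "ez E'' = ez ?E"
        using J4 xs by auto
      have "eval (Prec g h) (list_decode (exs E')) (ez E')" by (rule IH[OF e(1) e(2)])
      moreover have "eval h (list_decode (exs E'')) (ez E'')" by (rule IH[OF e(4) e(5)])
      ultimately have "eval (Prec g h) (m # rest) (ez E')" "eval h (m # ez E' # rest) (ez ?E)"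
        using e xs by simp_all
      then show ?thesis using Prec xs Suc by (simp add: eval_PrecS)
    qed
  next
    case (Mu g)
    have J5: "(\<exists>E'\<in>set (take i Ls). ef E' = code g \<and> exs E' = consc (ez ?E) (exs ?E) \<and> ez E' = 0) \<and>
      (\<forall>m < ez ?E. \<exists>E'\<in>set (take i Ls). ef E' = code g \<and> exs E' = consc m (exs ?E) \<and> ez E' \<noteq> 0)"
      using jstQ_tag5[OF J] less(3) Mu by simp
    then obtain E' where e: "E' \<in> set (take i Ls)" "ef E' = code g"
      "exs E' = consc (ez ?E) (exs ?E)" "ez E' = 0" by blast
    have "eval g (list_decode (exs E')) (ez E')" by (rule IH[OF e(1) e(2)])
    moreover have "list_decode (exs E') = ez ?E # ?xs" using e(3) by simp
    ultimately have 1: "eval g (ez ?E # ?xs) 0" using e(4) by simp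
    have 2: "\<forall>m<ez ?E. \<exists>k. eval g (m # ?xs) (Suc k)"
    proof (intro allI impI)
      fix m assume "m < ez ?E"
      then obtain E' where e: "E' \<in> set (take i Ls)" "ef E' = code g"
        "exs E' = consc m (exs ?E)" "ez E' \<noteq> 0" using J5 by blast
      have "eval g (list_decode (exs E')) (ez E')" by (rule IH[OF e(1) e(2)])
      moreover have "list_decode (exs E') = m # ?xs" using e(3) by simp
      ultimately have "eval g (m # ?xs) (ez E')" by simp
      then show "\<exists>k. eval g (m # ?xs) (Suc k)" using e(4) by (cases "ez E'") auto
    qed
    show ?thesis using Mu eval_Mu[OF 1 2] by simp
  qed
qed


lemma validL_single: "jstQ (\<lambda>P. \<exists>E\<in>set []. P E) e \<Longrightarrow> validL [e]"
  using validL_snoc[OF validL_Nil] by simp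

lemma validL_complete:
  "eval f xs z \<Longrightarrow> \<exists>Ls. validL Ls \<and> ent (code f) (list_encode xs) z \<in> set Ls"
proof (induct rule: eval.induct)
  case (eval_Zero xs)
  have "validL [ent (code Zero) (list_encode xs) 0]"
    by (rule validL_single, rule jstQ_I0) simp_all
  then show ?case by auto
next
  case (eval_Succ x xs)
  have "validL [ent (code Succ) (list_encode (x # xs)) (Suc x)]"
    by (rule validL_single, rule jstQ_I1) simp_all
  then show ?case by auto
next
  case (eval_Proj i xs)
  have "validL [ent (code (Proj i)) (list_encode xs) (xs ! i)]"
    by (rule validL_single, rule jstQ_I2) (simp_all add: eval_Proj)
  then show ?case by auto
next
  case (eval_Comp xs gs ys f z)
  have "\<exists>A. validL A \<and> (\<forall>k<length gs. ent (code (gs ! k)) (list_encode xs) (ys ! k) \<in> set A)"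
    using eval_Comp(1)
  proof (induct rule: list_all2_induct)
    case Nil then show ?case using validL_Nil by auto
  next
    case (Cons g gs y ys)
    then obtain A B where AB: "validL A" "\<forall>k<length gs. ent (code (gs ! k)) (list_encode xs) (ys ! k) \<in> set A"
      "validL B" "ent (code g) (list_encode xs) y \<in> set B" by blast
    then have "validL (B @ A)" by (simp add: validL_append)
    moreover have "\<forall>k<length (g # gs). ent (code ((g # gs) ! k)) (list_encode xs) ((y # ys) ! k) \<in> set (B @ A)"
    proof (intro allI impI)
      fix k assume "k < length (g # gs)"
      then show "ent (code ((g # gs) ! k)) (list_encode xs) ((y # ys) ! k) \<in> set (B @ A)"
        using AB(2,4) by (cases k) auto
    qed
    ultimately show ?case by blast
  qed
  then obtain A where A: "validL A" "\<forall>k<length gs. ent (code (gs ! k)) (list_encode xs) (ys ! k) \<in> set A" by blast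
  obtain B where B: "validL B" "ent (code f) (list_encode ys) z \<in> set B" using eval_Comp(3) by blast
  have len: "length gs = length ys" using eval_Comp(1) list_all2_lengthD by blast
  have "validL ((A @ B) @ [ent (code (Comp f gs)) (list_encode xs) z])"
  proof (rule validL_snoc[OF validL_append[OF A(1) B(1)]])
    have 1: "\<forall>k<length gs. \<exists>E''\<in>set (A @ B). ef E'' = code (gs ! k) \<and> exs E'' = list_encode xs \<and> ez E'' = ys ! k"
    proof (intro allI impI)
      fix k assume "k < length gs"
      then have "ent (code (gs ! k)) (list_encode xs) (ys ! k) \<in> set (A @ B)" using A(2) by simp
      then show "\<exists>E''\<in>set (A @ B). ef E'' = code (gs ! k) \<and> exs E'' = list_encode xs \<and> ez E'' = ys ! k"
        by (intro bexI[of _ "ent (code (gs ! k)) (list_encode xs) (ys ! k)"]) simp_all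
    qed
    have 2: "ent (code f) (list_encode ys) z \<in> set (A @ B)" using B(2) by simp
    have 3: "\<exists>E'\<in>set (A @ B). ef E' = code f \<and> ez E' = z \<and> lenc (exs E') = length gs \<and>
       (\<forall>k<length gs. \<exists>E''\<in>set (A @ B). ef E'' = code (gs ! k) \<and> exs E'' = list_encode xs \<and> ez E'' = nthc (exs E') k)"
      apply (rule bexI[OF _ 2])
      using 1 len by simp
    show "jstQ (\<lambda>P. \<exists>E\<in>set (A @ B). P E) (ent (code (Comp f gs)) (list_encode xs) z)"
      apply (rule jstQ_I3)
      using 3 by simp_all
  qed
  then show ?case by auto
next
  case (eval_Prec0 f xs y g)
  then obtain A where A: "validL A" "ent (code f) (list_encode xs) y \<in> set A" by blast
  have "validL (A @ [ent (code (Prec f g)) (list_encode (0 # xs)) y])"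
  proof (rule validL_snoc[OF A(1)])
    show "jstQ (\<lambda>P. \<exists>E\<in>set A. P E) (ent (code (Prec f g)) (list_encode (0 # xs)) y)"
      apply (rule jstQ_I4a)
      using A(2) by (simp_all add: bexI[of _ "ent (code f) (list_encode xs) y"])
  qed
  then show ?case by auto
next
  case (eval_PrecS f g n xs y z)
  then obtain A B where A: "validL A" "ent (code (Prec f g)) (list_encode (n # xs)) y \<in> set A"
    and B: "validL B" "ent (code g) (list_encode (n # y # xs)) z \<in> set B" by blast
  have "validL ((A @ B) @ [ent (code (Prec f g)) (list_encode (Suc n # xs)) z])"
  proof (rule validL_snoc[OF validL_append[OF A(1) B(1)]])
    have "\<exists>E'\<in>set (A @ B). ef E' = code (Prec f g) \<and> exs E' = list_encode (n # xs) \<and>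
        (\<exists>E''\<in>set (A @ B). ef E'' = code g \<and> exs E'' = list_encode (n # ez E' # xs) \<and> ez E'' = z)"
      apply (rule bexI[of _ "ent (code (Prec f g)) (list_encode (n # xs)) y"])
       apply simp
       apply (rule bexI[of _ "ent (code g) (list_encode (n # y # xs)) z"])
      using A(2) B(2) by simp_all
    then show "jstQ (\<lambda>P. \<exists>E\<in>set (A @ B). P E) (ent (code (Prec f g)) (list_encode (Suc n # xs)) z)"
      by (intro jstQ_I4b) (simp_all add: consc_def)
  qed
  then show ?case by auto
next
  case (eval_Mu f n xs)
  obtain A where A: "validL A" "ent (code f) (list_encode (n # xs)) 0 \<in> set A" using eval_Mu(2) by blast
  have "\<forall>m<n. \<exists>k B. validL B \<and> ent (code f) (list_encode (m # xs)) (Suc k) \<in> set B" using eval_Mu(3) by blast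
  then obtain K F where KF: "\<forall>m<n. validL (F m) \<and> ent (code f) (list_encode (m # xs)) (Suc (K m)) \<in> set (F m)"
    by metis
  let ?B = "concat (map F [0..<n])"
  have B: "validL ?B" using KF by (intro validL_concat) auto
  have "validL ((A @ ?B) @ [ent (code (Mu f)) (list_encode xs) n])"
  proof (rule validL_snoc[OF validL_append[OF A(1) B]])
    have 1: "\<exists>E'\<in>set (A @ ?B). ef E' = code f \<and> exs E' = list_encode (n # xs) \<and> ez E' = 0"
      by (rule bexI[of _ "ent (code f) (list_encode (n # xs)) 0"]) (use A(2) in simp_all)
    have 2: "\<forall>m<n. \<exists>E'\<in>set (A @ ?B). ef E' = code f \<and> exs E' = list_encode (m # xs) \<and> ez E' \<noteq> 0"
    proof (intro allI impI)
      fix m assume m: "m < n"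
      show "\<exists>E'\<in>set (A @ ?B). ef E' = code f \<and> exs E' = list_encode (m # xs) \<and> ez E' \<noteq> 0"
        apply (rule bexI[of _ "ent (code f) (list_encode (m # xs)) (Suc (K m))"])
         apply simp
        using KF m by auto
    qed
    show "jstQ (\<lambda>P. \<exists>E\<in>set (A @ ?B). P E) (ent (code (Mu f)) (list_encode xs) n)"
      by (rule jstQ_I5) (use 1 2 in simp_all)
  qed
  then show ?case by auto
qed

definition QE :: "expr list \<Rightarrow> (expr list \<Rightarrow> expr \<Rightarrow> expr) \<Rightarrow> expr" where
  "QE os P = eEX (os ! 1) (P (map lift os) (eNTH (lift (os ! 0)) (V 0)))"
definition ALLE :: "expr list \<Rightarrow> expr \<Rightarrow> (expr list \<Rightarrow> expr \<Rightarrow> expr) \<Rightarrow> expr" where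
  "ALLE os n P = eALL n (P (map lift os) (V 0))"

definition "eEF E = ePF E"
definition "eEXS E = ePF (ePS E)"
definition "eEZ E = ePS (ePS E)"
lemma den_eEF[simp]: "den (eEF E) env = ef (den E env)" by (simp add: eEF_def ef_def pfst_def)
lemma den_eEXS[simp]: "den (eEXS E) env = exs (den E env)" by (simp add: eEXS_def exs_def pfst_def psnd_def)
lemma den_eEZ[simp]: "den (eEZ E) env = ez (den E env)" by (simp add: eEZ_def ez_def psnd_def)
lemma den_ePF'[simp]: "den (ePF p) env = pfst (den p env)" by (simp add: pfst_def)
lemma den_ePS'[simp]: "den (ePS p) env = psnd (den p env)" by (simp add: psnd_def)
declare den_PF[simp del] den_PS[simp del]

definition "jst0E os = eAND (eEQ (ePF (eEF (os!2))) (C 0)) (eEQ (eEZ (os!2)) (C 0))"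
definition "jst1E os = eAND (eEQ (ePF (eEF (os!2))) (C 1)) (eAND (eNOT (eEQ (eEXS (os!2)) (C 0))) (eEQ (eEZ (os!2)) (Sc (eHD (eEXS (os!2))))))"
definition "jst2E os = eAND (eEQ (ePF (eEF (os!2))) (C 2)) (eAND (eLT (ePS (eEF (os!2))) (eLEN (eEXS (os!2)))) (eEQ (eEZ (os!2)) (eNTH (eEXS (os!2)) (ePS (eEF (os!2))))))"
definition "jst3E os = eAND (eEQ (ePF (eEF (os!2))) (C 3))
     (QE os (\<lambda>os E'. eAND (eEQ (eEF E') (ePF (ePS (eEF (os!2)))))
        (eAND (eEQ (eEZ E') (eEZ (os!2)))
        (eAND (eEQ (eLEN (eEXS E')) (eLEN (ePS (ePS (eEF (os!2))))))
          (ALLE (os @ [E']) (eLEN (ePS (ePS (eEF (os!2)))))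
            (\<lambda>os k. QE (os @ [k]) (\<lambda>os E''. eAND (eEQ (eEF E'') (eNTH (ePS (ePS (eEF (os!2)))) (os!4)))
                (eAND (eEQ (eEXS E'') (eEXS (os!2))) (eEQ (eEZ E'') (eNTH (eEXS (os!3)) (os!4)))))))))))"
definition "jst4aE os = eAND (eEQ (ePF (eEF (os!2))) (C 4)) (eAND (eNOT (eEQ (eEXS (os!2)) (C 0))) (eAND (eEQ (eHD (eEXS (os!2))) (C 0))
     (QE os (\<lambda>os E'. eAND (eEQ (eEF E') (ePF (ePS (eEF (os!2))))) (eAND (eEQ (eEXS E') (eTL (eEXS (os!2)))) (eEQ (eEZ E') (eEZ (os!2))))))))"
definition "jst4bE os = eAND (eEQ (ePF (eEF (os!2))) (C 4)) (eAND (eNOT (eEQ (eEXS (os!2)) (C 0))) (eAND (eNOT (eEQ (eHD (eEXS (os!2))) (C 0)))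
     (QE os (\<lambda>os E'. eAND (eEQ (eEF E') (eEF (os!2))) (eAND (eEQ (eEXS E') (eCONS (Sb (eHD (eEXS (os!2))) (C 1)) (eTL (eEXS (os!2)))))
        (QE (os @ [E']) (\<lambda>os E''. eAND (eEQ (eEF E'') (ePS (ePS (eEF (os!2)))))
           (eAND (eEQ (eEXS E'') (eCONS (Sb (eHD (eEXS (os!2))) (C 1)) (eCONS (eEZ (os!3)) (eTL (eEXS (os!2))))))
             (eEQ (eEZ E'') (eEZ (os!2)))))))))))"
definition "jst5E os = eAND (eEQ (ePF (eEF (os!2))) (C 5))
     (eAND (QE os (\<lambda>os E'. eAND (eEQ (eEF E') (ePS (eEF (os!2)))) (eAND (eEQ (eEXS E') (eCONS (eEZ (os!2)) (eEXS (os!2)))) (eEQ (eEZ E') (C 0)))))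
       (ALLE os (eEZ (os!2)) (\<lambda>os m. QE (os @ [m]) (\<lambda>os E'. eAND (eEQ (eEF E') (ePS (eEF (os!2))))
           (eAND (eEQ (eEXS E') (eCONS (os!3) (eEXS (os!2)))) (eNOT (eEQ (eEZ E') (C 0))))))))"
definition "jstE os = eOR (jst0E os) (eOR (jst1E os) (eOR (jst2E os) (eOR (jst3E os) (eOR (jst4aE os) (eOR (jst4bE os) (jst5E os))))))"

lemma den_QE: "length os > 1 \<Longrightarrow> den (QE os P) env =
   of_bool (\<exists>j < den (os!1) env. den (P (map lift os) (eNTH (lift (os!0)) (V 0))) (j # env) \<noteq> 0)"
  by (simp add: QE_def)
lemma den_ALLE: "den (ALLE os n P) env = of_bool (\<forall>k < den n env. den (P (map lift os) (V 0)) (k # env) \<noteq> 0)"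
  by (simp add: ALLE_def)

lemma ob_ne0: "((of_bool P :: nat) \<noteq> 0) = P" by simp
lemma den_V0: "den (V 0) (x # env) = x" by simp
lemmas DS = den_AND den_EQ den_OR den_NOT den_LT den_LE den.simps(2,3,5) den_eEF den_eEXS den_eEZ den_ePF' den_ePS'
  den_lift den_V0 den_NTH den_LEN den_HD den_TL den_CONS ob_ne0 list.map nth_Cons_0 nth_Cons_Suc
  eval_nat_numeral append_Cons append_Nil length_Cons length_map

context fixes L I E :: expr and env :: "nat list"
begin
lemma d0: "den (jst0E [L, I, E]) env = of_bool (pfst (ef (den E env)) = 0 \<and> ez (den E env) = 0)"
  by (simp only: jst0E_def den_QE den_ALLE DS) simp
lemma d1: "den (jst1E [L, I, E]) env = of_bool (pfst (ef (den E env)) = 1 \<and> exs (den E env) \<noteq> 0 \<and> ez (den E env) = Suc (hdc (exs (den E env))))"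
  by (simp only: jst1E_def den_QE den_ALLE DS) simp
lemma d2: "den (jst2E [L, I, E]) env = of_bool (pfst (ef (den E env)) = 2 \<and> psnd (ef (den E env)) < lenc (exs (den E env)) \<and> ez (den E env) = nthc (exs (den E env)) (psnd (ef (den E env))))"
  by (simp only: jst2E_def den_QE den_ALLE DS) simp
lemma d3: "den (jst3E [L, I, E]) env = of_bool (pfst (ef (den E env)) = 3 \<and> (\<lambda>P. \<exists>j < den I env. P (nthc (den L env) j)) (\<lambda>E'. ef E' = pfst (psnd (ef (den E env))) \<and> ez E' = ez (den E env) \<and>
        lenc (exs E') = lenc (psnd (psnd (ef (den E env)))) \<and>
        (\<forall>k < lenc (psnd (psnd (ef (den E env)))). (\<lambda>P. \<exists>j < den I env. P (nthc (den L env) j)) (\<lambda>E''. ef E'' = nthc (psnd (psnd (ef (den E env)))) k \<and>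
             exs E'' = exs (den E env) \<and> ez E'' = nthc (exs E') k))))"
  by (simp only: jst3E_def den_QE den_ALLE DS) simp
lemma d4a: "den (jst4aE [L, I, E]) env = of_bool (pfst (ef (den E env)) = 4 \<and> exs (den E env) \<noteq> 0 \<and> hdc (exs (den E env)) = 0 \<and>
      (\<lambda>P. \<exists>j < den I env. P (nthc (den L env) j)) (\<lambda>E'. ef E' = pfst (psnd (ef (den E env))) \<and> exs E' = tlc (exs (den E env)) \<and> ez E' = ez (den E env)))"
  by (simp only: jst4aE_def den_QE den_ALLE DS) simp
lemma d4b: "den (jst4bE [L, I, E]) env = of_bool (pfst (ef (den E env)) = 4 \<and> exs (den E env) \<noteq> 0 \<and> hdc (exs (den E env)) \<noteq> 0 \<and>
      (\<lambda>P. \<exists>j < den I env. P (nthc (den L env) j)) (\<lambda>E'. ef E' = ef (den E env) \<and> exs E' = consc (hdc (exs (den E env)) - 1) (tlc (exs (den E env))) \<and>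
        (\<lambda>P. \<exists>j < den I env. P (nthc (den L env) j)) (\<lambda>E''. ef E'' = psnd (psnd (ef (den E env))) \<and>
           exs E'' = consc (hdc (exs (den E env)) - 1) (consc (ez E') (tlc (exs (den E env)))) \<and> ez E'' = ez (den E env))))"
  by (simp only: jst4bE_def den_QE den_ALLE DS) simp
lemma d5: "den (jst5E [L, I, E]) env = of_bool (pfst (ef (den E env)) = 5 \<and> (\<lambda>P. \<exists>j < den I env. P (nthc (den L env) j)) (\<lambda>E'. ef E' = psnd (ef (den E env)) \<and> exs E' = consc (ez (den E env)) (exs (den E env)) \<and> ez E' = 0) \<and>
      (\<forall>m < ez (den E env). (\<lambda>P. \<exists>j < den I env. P (nthc (den L env) j)) (\<lambda>E'. ef E' = psnd (ef (den E env)) \<and> exs E' = consc m (exs (den E env)) \<and> ez E' \<noteq> 0)))"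
  by (simp only: jst5E_def den_QE den_ALLE DS) simp
lemma den_jstE: "den (jstE [L, I, E]) env = of_bool (jstQ (\<lambda>P. \<exists>j < den I env. P (nthc (den L env) j)) (den E env))"
  unfolding jstE_def den_OR d0 d1 d2 d3 d4a d4b d5 jstQ_def ob_ne0 by (rule refl)
end


definition "VALIDE L = eALL (eLEN L) (jstE [lift L, V 0, eNTH (lift L) (V 0)])"

definition validc :: "nat \<Rightarrow> bool" where
  "validc Lc \<longleftrightarrow> (\<forall>i<lenc Lc. jstQ (\<lambda>P. \<exists>j<i. P (nthc Lc j)) (nthc Lc i))"

lemma den_VALIDE: "den (VALIDE L) env = of_bool (validc (den L env))"
  unfolding VALIDE_def validc_def den_ALL den_jstE by simp

lemma validc_iff: "validc (list_encode Ls) \<longleftrightarrow> validL Ls"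
proof -
  have "(\<lambda>P. \<exists>j<i. P (nthc (list_encode Ls) j)) = (\<lambda>P. \<exists>E\<in>set (take i Ls). P E)" if "i < length Ls" for i
  proof (rule ext)
    fix P :: "nat \<Rightarrow> bool"
    show "(\<exists>j<i. P (nthc (list_encode Ls) j)) = (\<exists>E\<in>set (take i Ls). P E)"
    proof
      assume "\<exists>j<i. P (nthc (list_encode Ls) j)"
      then obtain j where "j < i" "P (nthc (list_encode Ls) j)" by blast
      then have "Ls ! j \<in> set (take i Ls)" "P (Ls ! j)" using that
        by (auto simp: in_set_conv_nth intro!: exI[of _ j])
      then show "\<exists>E\<in>set (take i Ls). P E" by blast
    next
      assume "\<exists>E\<in>set (take i Ls). P E"
      then obtain j where "j < length (take i Ls)" "P (take i Ls ! j)" by (auto simp: in_set_conv_nth)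
      then show "\<exists>j<i. P (nthc (list_encode Ls) j)" using that by (intro exI[of _ j]) auto
    qed
  qed
  then show ?thesis unfolding validc_def validL_def by simp
qed

definition Wtc :: "nat \<Rightarrow> nat \<Rightarrow> nat \<Rightarrow> nat \<Rightarrow> bool" where
  "Wtc e t a b \<longleftrightarrow> (\<exists>Lc<Suc t. validc Lc \<and> (\<exists>i<lenc Lc. ef (nthc Lc i) = e \<and> exs (nthc Lc i) = list_encode [a, b]))"

definition "WTE e t a b = eEX (Sc t) (eAND (VALIDE (V 0)) (eEX (eLEN (V 0))
   (eAND (eEQ (eEF (eNTH (V 1) (V 0))) (lift2 e)) (eEQ (eEXS (eNTH (V 1) (V 0))) (lift2 (eCONS a (eCONS b (C 0))))))))"

lemma den_WTE[simp]: "den (WTE e t a b) env = of_bool (Wtc (den e env) (den t env) (den a env) (den b env))"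
proof -
  have "consc (den a env) (consc (den b env) 0) = list_encode [den a env, den b env]"
    using consc_enc[of _ "[]"] consc_enc[of _ "[den b env]"] by simp
  then show ?thesis unfolding WTE_def Wtc_def den_EX den_AND den_VALIDE by simp
qed

lemma Wtc_mono: "Wtc e t a b \<Longrightarrow> t \<le> t' \<Longrightarrow> Wtc e t' a b"
  unfolding Wtc_def by (metis le_imp_less_Suc less_Suc_eq_le order.trans)

lemma Wtc_code: "(\<exists>t. Wtc (code g) t a b) \<longleftrightarrow> (\<exists>z. eval g [a, b] z)"
proof
  assume "\<exists>t. Wtc (code g) t a b"
  then obtain Lc i where v: "validc Lc" "i < lenc Lc" "ef (nthc Lc i) = code g" "exs (nthc Lc i) = list_encode [a, b]"
    unfolding Wtc_def by blast
  obtain Ls where Ls: "Lc = list_encode Ls" by (metis list_decode_inverse)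
  have "validL Ls" using v(1) Ls validc_iff by simp
  moreover have "i < length Ls" using v(2) Ls by simp
  ultimately have "eval g (list_decode (exs (Ls ! i))) (ez (Ls ! i))"
    using validL_sound v(3) Ls by simp
  then show "\<exists>z. eval g [a, b] z" using v(4) Ls \<open>i < length Ls\<close> by auto
next
  assume "\<exists>z. eval g [a, b] z"
  then obtain z where "eval g [a, b] z" by blast
  then obtain Ls where Ls: "validL Ls" "ent (code g) (list_encode [a, b]) z \<in> set Ls"
    using validL_complete by blast
  then obtain i where i: "i < length Ls" "Ls ! i = ent (code g) (list_encode [a, b]) z"
    by (auto simp: in_set_conv_nth)
  have "Wtc (code g) (list_encode Ls) a b"
    unfolding Wtc_def
    apply (rule exI[of _ "list_encode Ls"])
    using Ls(1) i by (auto simp: validc_iff)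
  then show "\<exists>t. Wtc (code g) t a b" by blast
qed

definition rx1 :: "nat \<Rightarrow> nat" where "rx1 s = pfst s"
definition rx2 :: "nat \<Rightarrow> nat" where "rx2 s = pfst (psnd s)"
definition ry :: "nat \<Rightarrow> nat" where "ry s = pfst (psnd (psnd s))"

lemma pfst_le: "pfst s \<le> s"
  by (metis le_prod_encode_1 pfst_def prod.collapse prod_decode_inverse)
lemma psnd_le: "psnd s \<le> s"
  by (metis le_prod_encode_2 psnd_def prod.collapse prod_decode_inverse)
lemma rx1_le: "rx1 s \<le> s" by (simp add: rx1_def pfst_le)
lemma rx2_le: "rx2 s \<le> s" using pfst_le psnd_le le_trans rx2_def by metis
lemma ry_le: "ry s \<le> s" using pfst_le psnd_le le_trans ry_def by metis

definition cnd :: "(nat \<Rightarrow> nat \<Rightarrow> nat \<Rightarrow> bool) \<Rightarrow> (nat \<Rightarrow> bool) \<Rightarrow> nat \<Rightarrow> nat \<Rightarrow> nat \<Rightarrow> nat \<Rightarrow> nat \<Rightarrow> bool" where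
  "cnd W A s a1 a2 b w \<longleftrightarrow> W (psnd w) (pfst w) b \<and> (A s \<longrightarrow> W (psnd w) a1 (pfst w) \<and> W (psnd w) a2 (pfst w))"

function phiW :: "(nat \<Rightarrow> nat \<Rightarrow> nat \<Rightarrow> bool) \<Rightarrow> (nat \<Rightarrow> bool) \<Rightarrow> nat \<Rightarrow> (nat \<times> nat) option" where
  "phiW W A u = (if even u then Some (u div 2, 0) else
     (case phiW W A (ry (u div 2)) of None \<Rightarrow> None | Some (b, fy) \<Rightarrow>
     (case phiW W A (rx1 (u div 2)) of None \<Rightarrow> None | Some (a1, f1) \<Rightarrow>
     (case phiW W A (rx2 (u div 2)) of None \<Rightarrow> None | Some (a2, f2) \<Rightarrow>
       (if \<exists>w. cnd W A (u div 2) a1 a2 b w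
        then Some (pfst (LEAST w. cnd W A (u div 2) a1 a2 b w),
                   max (LEAST w. cnd W A (u div 2) a1 a2 b w) (max fy (max f1 f2)))
        else None)))))"
  by pat_completeness auto
lemma lt_aux: "rx1 b < Suc (2 * b)" "rx2 b < Suc (2 * b)" "ry b < Suc (2 * b)"
  using rx1_le[of b] rx2_le[of b] ry_le[of b] by simp_all

termination
  by (relation "Wellfounded.measure (\<lambda>(W, A, u). u)") (auto elim!: oddE simp: lt_aux)

declare phiW.simps[simp del]

lemma phiW_even: "even u \<Longrightarrow> phiW W A u = Some (u div 2, 0)"
  by (simp add: phiW.simps)

lemma phiW_oddD:
  assumes "odd u" "phiW W A u = Some (c, f)"
  obtains b fy a1 f1 a2 f2 where "phiW W A (ry (u div 2)) = Some (b, fy)"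
    "phiW W A (rx1 (u div 2)) = Some (a1, f1)" "phiW W A (rx2 (u div 2)) = Some (a2, f2)"
    "cnd W A (u div 2) a1 a2 b (LEAST w. cnd W A (u div 2) a1 a2 b w)"
    "c = pfst (LEAST w. cnd W A (u div 2) a1 a2 b w)"
    "f = max (LEAST w. cnd W A (u div 2) a1 a2 b w) (max fy (max f1 f2))"
proof -
  from assms have eq: "phiW W A u = (case phiW W A (ry (u div 2)) of None \<Rightarrow> None | Some (b, fy) \<Rightarrow>
     (case phiW W A (rx1 (u div 2)) of None \<Rightarrow> None | Some (a1, f1) \<Rightarrow>
     (case phiW W A (rx2 (u div 2)) of None \<Rightarrow> None | Some (a2, f2) \<Rightarrow>
       (if \<exists>w. cnd W A (u div 2) a1 a2 b w
        then Some (pfst (LEAST w. cnd W A (u div 2) a1 a2 b w),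
                   max (LEAST w. cnd W A (u div 2) a1 a2 b w) (max fy (max f1 f2)))
        else None))))" by (simp add: phiW.simps)
  show ?thesis
  proof (cases "phiW W A (ry (u div 2))")
    case None then show ?thesis using eq assms(2) by simp
  next
    case (Some p1)
    obtain b fy where p1: "p1 = (b, fy)" by force
    show ?thesis
    proof (cases "phiW W A (rx1 (u div 2))")
      case None then show ?thesis using eq assms(2) Some p1 by simp
    next
      case (Some p2)
      obtain a1 f1 where p2: "p2 = (a1, f1)" by force
      show ?thesis
      proof (cases "phiW W A (rx2 (u div 2))")
        case None then show ?thesis using eq assms(2) Some \<open>phiW W A (ry (u div 2)) = Some p1\<close> p1 p2 by simp
      next
        case (Some p3)
        obtain a2 f2 where p3: "p3 = (a2, f2)" by force
        have ex: "\<exists>w. cnd W A (u div 2) a1 a2 b w"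
        proof (rule ccontr)
          assume "\<not> ?thesis"
          then show False using eq assms(2) Some p3 \<open>phiW W A (ry (u div 2)) = Some p1\<close> p1
            \<open>phiW W A (rx1 (u div 2)) = Some p2\<close> p2 by (auto split: if_splits)
        qed
        have v: "phiW W A u = Some (pfst (LEAST w. cnd W A (u div 2) a1 a2 b w),
                   max (LEAST w. cnd W A (u div 2) a1 a2 b w) (max fy (max f1 f2)))"
          using eq ex Some p3 \<open>phiW W A (ry (u div 2)) = Some p1\<close> p1
            \<open>phiW W A (rx1 (u div 2)) = Some p2\<close> p2 by simp
        show ?thesis
          apply (rule that[of b fy a1 f1 a2 f2])
          using \<open>phiW W A (ry (u div 2)) = Some p1\<close> p1 \<open>phiW W A (rx1 (u div 2)) = Some p2\<close> p2
            Some p3 apply simp_all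
          using LeastI_ex[OF ex] apply simp
          using v assms(2) by simp_all
      qed
    qed
  qed
qed

lemma phiW_oddI:
  assumes "odd u" "phiW W A (ry (u div 2)) = Some (b, fy)"
    "phiW W A (rx1 (u div 2)) = Some (a1, f1)" "phiW W A (rx2 (u div 2)) = Some (a2, f2)"
    "cnd W A (u div 2) a1 a2 b w"
  shows "\<exists>c f. phiW W A u = Some (c, f)"
proof -
  have ex: "\<exists>w. cnd W A (u div 2) a1 a2 b w" using assms(5) by blast
  have "phiW W A u = (if \<exists>w. cnd W A (u div 2) a1 a2 b w
        then Some (pfst (LEAST w. cnd W A (u div 2) a1 a2 b w),
                   max (LEAST w. cnd W A (u div 2) a1 a2 b w) (max fy (max f1 f2)))
        else None)"
    using assms(1-4) by (subst phiW.simps) simp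
  then show ?thesis using ex by simp
qed

lemma phiW_local: "(\<And>j. j \<le> u div 2 \<Longrightarrow> A j = A' j) \<Longrightarrow> phiW W A u = phiW W A' u"
proof (induct u rule: less_induct)
  case (less u)
  show ?case
  proof (cases "even u")
    case True then show ?thesis by (simp add: phiW_even)
  next
    case False
    let ?s = "u div 2"
    have lt: "ry ?s < u" "rx1 ?s < u" "rx2 ?s < u" using False lt_aux[of ?s] by (auto elim!: oddE)
    have le: "p \<le> ?s \<Longrightarrow> j \<le> p div 2 \<Longrightarrow> j \<le> ?s" for p j by simp
    have "phiW W A (ry ?s) = phiW W A' (ry ?s)" "phiW W A (rx1 ?s) = phiW W A' (rx1 ?s)"
      "phiW W A (rx2 ?s) = phiW W A' (rx2 ?s)"
    proof -
      have h: "p \<le> ?s \<Longrightarrow> j \<le> p div 2 \<Longrightarrow> A j = A' j" for p j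
        using less(2)[of j] by (meson div_le_dividend le_trans)
      show "phiW W A (ry ?s) = phiW W A' (ry ?s)" by (rule less(1)[OF lt(1)]) (rule h[OF ry_le])
      show "phiW W A (rx1 ?s) = phiW W A' (rx1 ?s)" by (rule less(1)[OF lt(2)]) (rule h[OF rx1_le])
      show "phiW W A (rx2 ?s) = phiW W A' (rx2 ?s)" by (rule less(1)[OF lt(3)]) (rule h[OF rx2_le])
    qed
    moreover have "cnd W A ?s = cnd W A' ?s" using less(2)[of ?s] by (auto simp: cnd_def fun_eq_iff)
    ultimately show ?thesis by (subst (1 2) phiW.simps) (simp only: if_False False)
  qed
qed

definition phit :: "(nat \<Rightarrow> nat \<Rightarrow> nat \<Rightarrow> bool) \<Rightarrow> (nat \<Rightarrow> bool) \<Rightarrow> nat \<Rightarrow> nat \<Rightarrow> nat option" where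
  "phit W A t u = (case phiW W A u of Some (c, f) \<Rightarrow> if f \<le> t then Some c else None | None \<Rightarrow> None)"

lemma phit_mono: "phit W A t u = Some c \<Longrightarrow> t \<le> t' \<Longrightarrow> phit W A t' u = Some c"
  by (auto simp: phit_def split: option.splits if_splits)

lemma phit_SomeD: "phit W A t u = Some c \<Longrightarrow> \<exists>f. phiW W A u = Some (c, f)"
  by (auto simp: phit_def split: option.splits if_splits)

lemma phit_SomeI: "phiW W A u = Some (c, f) \<Longrightarrow> f \<le> t \<Longrightarrow> phit W A t u = Some c"
  by (auto simp: phit_def)

definition gen :: "(nat \<Rightarrow> nat \<Rightarrow> nat \<Rightarrow> bool) \<Rightarrow> (nat \<Rightarrow> bool) \<Rightarrow> nat \<Rightarrow> nat \<Rightarrow> nat \<Rightarrow> bool" where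
  "gen W A t u v \<longleftrightarrow>
    (even u \<and> even v \<and> W t (u div 2) (v div 2)) \<or>
    (odd u \<and> u div 2 < t \<and> v = ry (u div 2)) \<or>
    (odd v \<and> v div 2 < t \<and> A (v div 2) \<and> (u = rx1 (v div 2) \<or> u = rx2 (v div 2))) \<or>
    (even u \<and> odd v \<and> v div 2 < t \<and> (\<exists>c. phit W A t v = Some c \<and> W t (u div 2) c)) \<or>
    (odd u \<and> even v \<and> u div 2 < t \<and> (\<exists>c. phit W A t u = Some c \<and> W t c (v div 2)))"

fun chn :: "(nat \<Rightarrow> nat \<Rightarrow> bool) \<Rightarrow> nat list \<Rightarrow> bool" where
  "chn G (a # b # l) = (G a b \<and> chn G (b # l))"
| "chn G _ = True"

definition lt :: "(nat \<Rightarrow> nat \<Rightarrow> nat \<Rightarrow> bool) \<Rightarrow> (nat \<Rightarrow> bool) \<Rightarrow> nat \<Rightarrow> nat \<Rightarrow> nat \<Rightarrow> bool" where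
  "lt W A t u v \<longleftrightarrow> (\<exists>l. list_encode l \<le> t \<and> 2 \<le> length l \<and> hd l = u \<and> last l = v \<and> chn (gen W A t) l)"

definition Fa :: "(nat \<Rightarrow> nat \<Rightarrow> nat \<Rightarrow> bool) \<Rightarrow> nat \<Rightarrow> (nat \<Rightarrow> bool) \<Rightarrow> bool" where
  "Fa W s A \<longleftrightarrow> lt W A s (rx1 s) (ry s) \<and> lt W A s (rx2 s) (ry s)"

primrec actl :: "(nat \<Rightarrow> nat \<Rightarrow> nat \<Rightarrow> bool) \<Rightarrow> nat \<Rightarrow> bool list" where
  "actl W 0 = []"
| "actl W (Suc s) = actl W s @ [Fa W s (\<lambda>j. j < s \<and> actl W s ! j)]"

definition act :: "(nat \<Rightarrow> nat \<Rightarrow> nat \<Rightarrow> bool) \<Rightarrow> nat \<Rightarrow> bool" where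
  "act W s = actl W (Suc s) ! s"

definition Rel :: "(nat \<Rightarrow> nat \<Rightarrow> nat \<Rightarrow> bool) \<Rightarrow> nat \<Rightarrow> nat \<Rightarrow> bool" where
  "Rel W x y \<longleftrightarrow> (\<exists>t. lt W (act W) t x y)"

lemma length_actl[simp]: "length (actl W s) = s" by (induct s) auto

lemma actl_nth: "j < s \<Longrightarrow> actl W s ! j = act W j"
proof (induct s)
  case (Suc s)
  then show ?case by (cases "j = s") (auto simp: act_def nth_append)
qed simp

lemma gen_local: "(\<And>j. j < t \<Longrightarrow> A j = A' j) \<Longrightarrow> gen W A t u v = gen W A' t u v"
proof -
  assume a: "\<And>j. j < t \<Longrightarrow> A j = A' j"
  have "v div 2 < t \<Longrightarrow> phit W A t v = phit W A' t v" for v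
  proof -
    assume "v div 2 < t"
    then have "phiW W A v = phiW W A' v" using a by (intro phiW_local) simp
    then show ?thesis by (simp add: phit_def)
  qed
  then show ?thesis unfolding gen_def using a by (simp cong: conj_cong)
qed

lemma chn_cong: "(\<And>x y. G x y = G' x y) \<Longrightarrow> chn G l = chn G' l"
  by (induct G l rule: chn.induct) auto

lemma lt_local: "(\<And>j. j < t \<Longrightarrow> A j = A' j) \<Longrightarrow> lt W A t u v = lt W A' t u v"
proof -
  assume a: "\<And>j. j < t \<Longrightarrow> A j = A' j"
  have "gen W A t = gen W A' t" using gen_local[of t A A' W] a by (intro ext) blast
  then show ?thesis unfolding lt_def by simp
qed

lemma act_eq: "act W s = Fa W s (act W)"
proof -
  have 1: "act W s = Fa W s (\<lambda>j. j < s \<and> actl W s ! j)" unfolding act_def actl.simps by (metis length_actl nth_append_length)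
  have "(\<lambda>j. j < s \<and> actl W s ! j) = (\<lambda>j. j < s \<and> act W j)" using actl_nth[of _ s W] by auto
  then have 2: "Fa W s (\<lambda>j. j < s \<and> actl W s ! j) = Fa W s (\<lambda>j. j < s \<and> act W j)" by simp
  have 3: "Fa W s (\<lambda>j. j < s \<and> act W j) = Fa W s (act W)" unfolding Fa_def using lt_local[of s "\<lambda>j. j < s \<and> act W j" "act W" W] by simp
  show ?thesis using 1 2 3 by simp
qed

definition Wmono :: "(nat \<Rightarrow> nat \<Rightarrow> nat \<Rightarrow> bool) \<Rightarrow> bool" where
  "Wmono W \<longleftrightarrow> (\<forall>t t' a b. W t a b \<longrightarrow> t \<le> t' \<longrightarrow> W t' a b)"

lemma gen_mono: "Wmono W \<Longrightarrow> gen W A t u v \<Longrightarrow> t \<le> t' \<Longrightarrow> gen W A t' u v"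
  unfolding gen_def Wmono_def
  apply (elim disjE)
      apply blast
     apply (rule disjI2, rule disjI1) apply simp
    apply (rule disjI2, rule disjI2, rule disjI1) apply auto[1]
   apply (rule disjI2, rule disjI2, rule disjI2, rule disjI1) apply (auto intro: phit_mono)[1]
  apply (rule disjI2, rule disjI2, rule disjI2, rule disjI2) apply (auto intro: phit_mono)[1]
  done

lemma chn_mono: "(\<And>x y. G x y \<Longrightarrow> G' x y) \<Longrightarrow> chn G l \<Longrightarrow> chn G' l"
  by (induct G l rule: chn.induct) auto

lemma lt_mono: "Wmono W \<Longrightarrow> lt W A t u v \<Longrightarrow> t \<le> t' \<Longrightarrow> lt W A t' u v"
proof -
  assume m: "Wmono W" and "lt W A t u v" and tt: "t \<le> t'"
  then obtain l where l: "list_encode l \<le> t" "2 \<le> length l" "hd l = u" "last l = v" "chn (gen W A t) l"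
    unfolding lt_def by blast
  have "chn (gen W A t') l" using l(5) by (rule chn_mono[rotated]) (rule gen_mono[OF m _ tt])
  then show ?thesis unfolding lt_def using l tt by (intro exI[of _ l]) auto
qed

lemma chn_append: "chn G l1 \<Longrightarrow> chn G l2 \<Longrightarrow> l1 \<noteq> [] \<Longrightarrow> l2 \<noteq> [] \<Longrightarrow> last l1 = hd l2 \<Longrightarrow>
  chn G (l1 @ tl l2)"
proof (induct G l1 rule: chn.induct)
  case (1 G a b l)
  then show ?case by simp
next
  case ("2_2" G a)
  then show ?case by (cases l2; cases "tl l2") auto
qed simp

lemma lt_trans:
  assumes "Wmono W" "lt W A t u v" "lt W A t' v w"
  shows "\<exists>t''. lt W A t'' u w"
proof -
  obtain l1 where l1: "list_encode l1 \<le> t" "2 \<le> length l1" "hd l1 = u" "last l1 = v" "chn (gen W A t) l1"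
    using assms(2) unfolding lt_def by blast
  obtain l2 where l2: "list_encode l2 \<le> t'" "2 \<le> length l2" "hd l2 = v" "last l2 = w" "chn (gen W A t') l2"
    using assms(3) unfolding lt_def by blast
  let ?T = "max (max t t') (list_encode (l1 @ tl l2))"
  have "chn (gen W A ?T) l1" using l1(5) by (rule chn_mono[rotated]) (rule gen_mono[OF assms(1)], auto)
  moreover have "chn (gen W A ?T) l2" using l2(5) by (rule chn_mono[rotated]) (rule gen_mono[OF assms(1)], auto)
  ultimately have c: "chn (gen W A ?T) (l1 @ tl l2)" using l1 l2 by (intro chn_append) auto
  obtain p q r where l2e: "l2 = p # q # r" using l2(2) by (cases l2; cases "tl l2") auto
  obtain p1 q1 r1 where l1e: "l1 = p1 # q1 # r1" using l1(2) by (cases l1; cases "tl l1") auto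
  have "hd (l1 @ tl l2) = u" "last (l1 @ tl l2) = w" "2 \<le> length (l1 @ tl l2)"
    using l1(3) l2(4) unfolding l1e l2e by (simp_all add: last_append)
  then have "lt W A ?T u w" unfolding lt_def using c by (intro exI[of _ "l1 @ tl l2"]) auto
  then show ?thesis by blast
qed

lemma lt_two: "gen W A t u v \<Longrightarrow> list_encode [u, v] \<le> t \<Longrightarrow> lt W A t u v"
  unfolding lt_def by (intro exI[of _ "[u, v]"]) auto

lemma Rel_trans: "Wmono W \<Longrightarrow> transp (Rel W)"
  unfolding transp_def Rel_def using lt_trans by metis

lemma lt_gen: "Wmono W \<Longrightarrow> gen W A t u v \<Longrightarrow> \<exists>t'. lt W A t' u v"
proof -
  assume m: "Wmono W" and g: "gen W A t u v"
  have "gen W A (max t (list_encode [u, v])) u v" by (rule gen_mono[OF m g]) simp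
  then have "lt W A (max t (list_encode [u, v])) u v" by (rule lt_two) simp
  then show ?thesis by blast
qed

lemma pe3: "rx1 (prod_encode (a, prod_encode (b, prod_encode (c, d)))) = a"
  "rx2 (prod_encode (a, prod_encode (b, prod_encode (c, d)))) = b"
  "ry (prod_encode (a, prod_encode (b, prod_encode (c, d)))) = c"
  by (simp_all add: rx1_def rx2_def ry_def)

lemma pe3_ge: "d \<le> prod_encode (a, prod_encode (b, prod_encode (c, d)))"
  by (meson le_prod_encode_2 le_trans)

lemma Rel_pred: "Wmono W \<Longrightarrow> Rel W (2 * prod_encode (0, prod_encode (0, prod_encode (y, 0))) + 1) y"
proof -
  assume m: "Wmono W"
  let ?s = "prod_encode (0, prod_encode (0, prod_encode (y, 0)))"
  have "gen W (act W) (Suc ?s) (2 * ?s + 1) y" unfolding gen_def by (simp add: pe3)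
  then show ?thesis unfolding Rel_def using lt_gen[OF m] by blast
qed

lemma Rel_interp: "Wmono W \<Longrightarrow> interpolable (Rel W)"
  unfolding interpolable_def directed_in_def
proof (intro allI conjI ballI)
  fix y assume m: "Wmono W"
  show "{x. Rel W x y} \<noteq> {}" using Rel_pred[OF m, of y] by blast
  fix x1 x2 assume x: "x1 \<in> {x. Rel W x y}" "x2 \<in> {x. Rel W x y}"
  then obtain t1 t2 where "lt W (act W) t1 x1 y" "lt W (act W) t2 x2 y" unfolding Rel_def by blast
  then have l: "lt W (act W) (max t1 t2) x1 y" "lt W (act W) (max t1 t2) x2 y"
    using lt_mono[OF m] max.cobounded1 max.cobounded2 by blast+
  let ?s = "prod_encode (x1, prod_encode (x2, prod_encode (y, max t1 t2)))"
  have "lt W (act W) ?s x1 y" "lt W (act W) ?s x2 y" by (rule lt_mono[OF m l(1) pe3_ge], rule lt_mono[OF m l(2) pe3_ge])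
  then have a: "act W ?s" using act_eq[of W ?s] unfolding Fa_def by (simp add: pe3)
  have "gen W (act W) (Suc ?s) x1 (2 * ?s + 1)" "gen W (act W) (Suc ?s) x2 (2 * ?s + 1)"
    "gen W (act W) (Suc ?s) (2 * ?s + 1) y"
    unfolding gen_def using a by (simp_all add: pe3)
  then have "Rel W x1 (2 * ?s + 1)" "Rel W x2 (2 * ?s + 1)" "Rel W (2 * ?s + 1) y"
    unfolding Rel_def using lt_gen[OF m] by blast+
  then show "\<exists>z\<in>{x. Rel W x y}. Rel W x1 z \<and> Rel W x2 z" by blast
qed


lemma mem_le_list_encode: "x \<in> set l \<Longrightarrow> x \<le> list_encode l"
proof (induct l)
  case (Cons a l)
  then show ?case using le_prod_encode_1[of a "list_encode l"] le_prod_encode_2[of "list_encode l" a]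
    by auto
qed simp

lemma chn_prop0:
  assumes "transp P" "\<And>x y. Q x \<Longrightarrow> Q y \<Longrightarrow> G x y \<Longrightarrow> P x y"
  shows "chn G (a # l) \<Longrightarrow> (\<forall>x\<in>set (a # l). Q x) \<Longrightarrow> l \<noteq> [] \<Longrightarrow> P a (last l)"
proof (induct l arbitrary: a)
  case (Cons b l')
  then have ab: "P a b" using assms(2) by auto
  show ?case
  proof (cases "l' = []")
    case True then show ?thesis using ab by simp
  next
    case False
    then have "P b (last l')" using Cons by auto
    then show ?thesis using ab assms(1) False by (auto elim: transpE)
  qed
qed simp

lemma chn_prop:
  assumes "transp P" "\<And>x y. Q x \<Longrightarrow> Q y \<Longrightarrow> G x y \<Longrightarrow> P x y"
  shows "chn G l \<Longrightarrow> 2 \<le> length l \<Longrightarrow> (\<forall>x\<in>set l. Q x) \<Longrightarrow> P (hd l) (last l)"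
proof -
  assume a: "chn G l" "2 \<le> length l" "\<forall>x\<in>set l. Q x"
  then obtain b l' where l: "l = b # l'" "l' \<noteq> []" by (cases l) force+
  then have "P b (last l')" using chn_prop0[OF assms, where a=b and l=l'] a by simp
  then show ?thesis using l by simp
qed

context
  fixes W :: "nat \<Rightarrow> nat \<Rightarrow> nat \<Rightarrow> bool" and R :: "nat \<Rightarrow> nat \<Rightarrow> bool"
  assumes m: "Wmono W" and iff: "\<And>a b. R a b \<longleftrightarrow> (\<exists>t. W t a b)"
    and tr: "transp R" and ip: "interpolable R"
begin

lemma W_R: "W t a b \<Longrightarrow> R a b" using iff by blast

lemma gen_cons:
  assumes g: "gen W (act W) t p q" and p: "phiW W (act W) p = Some (\<alpha>, f)" and q: "phiW W (act W) q = Some (\<beta>, f')"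
  shows "R \<alpha> \<beta>"
  using g unfolding gen_def
proof (elim disjE conjE exE)
  assume "even p" "even q" "W t (p div 2) (q div 2)"
  then show ?thesis using p q by (simp add: phiW_even W_R)
next
  assume o: "odd p" "p div 2 < t" "q = ry (p div 2)"
  obtain b fy a1 f1 a2 f2 where "phiW W (act W) (ry (p div 2)) = Some (b, fy)"
    "cnd W (act W) (p div 2) a1 a2 b (LEAST w. cnd W (act W) (p div 2) a1 a2 b w)"
    "\<alpha> = pfst (LEAST w. cnd W (act W) (p div 2) a1 a2 b w)" by (rule phiW_oddD[OF o(1) p])
  then show ?thesis using q o by (auto simp: cnd_def intro: W_R)
next
  assume o: "odd q" "q div 2 < t" "act W (q div 2)" "p = rx1 (q div 2)"
  obtain b fy a1 f1 a2 f2 where "phiW W (act W) (rx1 (q div 2)) = Some (a1, f1)"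
    "cnd W (act W) (q div 2) a1 a2 b (LEAST w. cnd W (act W) (q div 2) a1 a2 b w)"
    "\<beta> = pfst (LEAST w. cnd W (act W) (q div 2) a1 a2 b w)" by (rule phiW_oddD[OF o(1) q])
  then show ?thesis using p o by (auto simp: cnd_def intro: W_R)
next
  assume o: "odd q" "q div 2 < t" "act W (q div 2)" "p = rx2 (q div 2)"
  obtain b fy a1 f1 a2 f2 where "phiW W (act W) (rx2 (q div 2)) = Some (a2, f2)"
    "cnd W (act W) (q div 2) a1 a2 b (LEAST w. cnd W (act W) (q div 2) a1 a2 b w)"
    "\<beta> = pfst (LEAST w. cnd W (act W) (q div 2) a1 a2 b w)" by (rule phiW_oddD[OF o(1) q])
  then show ?thesis using p o by (auto simp: cnd_def intro: W_R)
next
  fix c assume "even p" "odd q" "phit W (act W) t q = Some c" "W t (p div 2) c"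
  then show ?thesis using p q phit_SomeD by (fastforce simp: phiW_even intro: W_R)
next
  fix c assume "odd p" "even q" "phit W (act W) t p = Some c" "W t c (q div 2)"
  then show ?thesis using p q phit_SomeD by (fastforce simp: phiW_even intro: W_R)
qed

definition phi :: "nat \<Rightarrow> nat" where "phi u = fst (the (phiW W (act W) u))"

lemma lt_cons:
  assumes "lt W (act W) t u v" "\<And>x. x \<le> t \<Longrightarrow> phiW W (act W) x \<noteq> None"
  shows "R (phi u) (phi v)"
proof -
  obtain l where l: "list_encode l \<le> t" "2 \<le> length l" "hd l = u" "last l = v" "chn (gen W (act W) t) l"
    using assms(1) unfolding lt_def by blast
  have "(\<lambda>x y. R (phi x) (phi y)) (hd l) (last l)"
  proof (rule chn_prop[OF _ _ l(5) l(2)])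
    show "transp (\<lambda>x y. R (phi x) (phi y))" using tr by (auto simp: transp_def)
    show "\<forall>x\<in>set l. phiW W (act W) x \<noteq> None" using assms(2) l(1) mem_le_list_encode le_trans by blast
    fix x y assume "phiW W (act W) x \<noteq> None" "phiW W (act W) y \<noteq> None" "gen W (act W) t x y"
    then show "R (phi x) (phi y)" unfolding phi_def using gen_cons by (auto simp: phi_def)
  qed
  then show ?thesis using l by simp
qed

lemma total: "phiW W (act W) u \<noteq> None"
proof (induct u rule: less_induct)
  case (less u)
  show ?case
  proof (cases "even u")
    case True then show ?thesis by (simp add: phiW_even)
  next
    case False
    let ?s = "u div 2"
    have lts: "ry ?s < u" "rx1 ?s < u" "rx2 ?s < u" using False lt_aux[of ?s] by (auto elim!: oddE)
    obtain b fy where b: "phiW W (act W) (ry ?s) = Some (b, fy)" using less(1)[OF lts(1)] by force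
    obtain a1 f1 where a1: "phiW W (act W) (rx1 ?s) = Some (a1, f1)" using less(1)[OF lts(2)] by force
    obtain a2 f2 where a2: "phiW W (act W) (rx2 ?s) = Some (a2, f2)" using less(1)[OF lts(3)] by force
    have "\<exists>w. cnd W (act W) ?s a1 a2 b w"
    proof (cases "act W ?s")
      case True
      then have "lt W (act W) ?s (rx1 ?s) (ry ?s)" "lt W (act W) ?s (rx2 ?s) (ry ?s)"
        using act_eq[of W ?s] unfolding Fa_def by auto
      moreover have "x \<le> ?s \<Longrightarrow> phiW W (act W) x \<noteq> None" for x using less(1)[of x] False by (auto elim!: oddE)
      ultimately have "R (phi (rx1 ?s)) (phi (ry ?s))" "R (phi (rx2 ?s)) (phi (ry ?s))" using lt_cons by blast+
      then have r: "R a1 b" "R a2 b" using a1 a2 b by (simp_all add: phi_def)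
      then obtain c where c: "R c b" "R a1 c" "R a2 c" using ip unfolding interpolable_def directed_in_def
        by blast
      then obtain t1 t2 t3 where "W t1 c b" "W t2 a1 c" "W t3 a2 c" using iff by blast
      then have "W (max t1 (max t2 t3)) c b" "W (max t1 (max t2 t3)) a1 c" "W (max t1 (max t2 t3)) a2 c"
        using m unfolding Wmono_def by (meson max.cobounded1 max.cobounded2 le_trans)+
      then have "cnd W (act W) ?s a1 a2 b (prod_encode (c, max t1 (max t2 t3)))" by (simp add: cnd_def)
      then show ?thesis by blast
    next
      case False
      obtain c where "R c b" using ip unfolding interpolable_def directed_in_def by blast
      then obtain t where "W t c b" using iff by blast
      then have "cnd W (act W) ?s a1 a2 b (prod_encode (c, t))" using False by (simp add: cnd_def)
      then show ?thesis by blast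
    qed
    then show ?thesis using phiW_oddI[OF False b a1 a2] by blast
  qed
qed

lemma phi_even: "phi (2 * a) = a" by (simp add: phi_def phiW_even)

lemma Rel_to_R: "Rel W u v \<Longrightarrow> R (phi u) (phi v)"
  unfolding Rel_def using lt_cons total by blast

lemma phit_big: "\<exists>T. \<forall>t\<ge>T. phit W (act W) t u = Some (phi u)"
proof -
  obtain c f where "phiW W (act W) u = Some (c, f)" using total[of u] by force
  then show ?thesis by (intro exI[of _ f]) (auto simp: phi_def intro: phit_SomeI)
qed

lemma Rel_to_real: "R (phi u) c \<Longrightarrow> Rel W u (2 * c)"
proof -
  assume "R (phi u) c"
  then obtain t0 where t0: "W t0 (phi u) c" using iff by blast
  obtain T where T: "\<forall>t\<ge>T. phit W (act W) t u = Some (phi u)" using phit_big by blast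
  let ?t = "max t0 (max T (Suc (u div 2)))"
  have w: "W ?t (phi u) c" using t0 m unfolding Wmono_def by simp
  have "gen W (act W) ?t u (2 * c)"
  proof (cases "even u")
    case True then show ?thesis using w unfolding gen_def by (simp add: phi_def phiW_even)
  next
    case False then show ?thesis using w T unfolding gen_def by auto
  qed
  then show ?thesis unfolding Rel_def using lt_gen[OF m] by blast
qed

lemma Rel_from_real: "R c (phi v) \<Longrightarrow> Rel W (2 * c) v"
proof -
  assume "R c (phi v)"
  then obtain t0 where t0: "W t0 c (phi v)" using iff by blast
  obtain T where T: "\<forall>t\<ge>T. phit W (act W) t v = Some (phi v)" using phit_big by blast
  let ?t = "max t0 (max T (Suc (v div 2)))"
  have w: "W ?t c (phi v)" using t0 m unfolding Wmono_def by simp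
  have "gen W (act W) ?t (2 * c) v"
  proof (cases "even v")
    case True then show ?thesis using w unfolding gen_def by (simp add: phi_def phiW_even)
  next
    case False then show ?thesis using w T unfolding gen_def by auto
  qed
  then show ?thesis unfolding Rel_def using lt_gen[OF m] by blast
qed

lemma Rel_iff: "Rel W u v \<longleftrightarrow> R (phi u) (phi v)"
proof
  assume "R (phi u) (phi v)"
  then have "phi u \<in> {x. R x (phi v)}" by simp
  then obtain c where "R c (phi v)" "R (phi u) c" using ip unfolding interpolable_def directed_in_def
    by blast
  then have "Rel W u (2 * c)" "Rel W (2 * c) v" using Rel_to_real Rel_from_real by blast+
  then show "Rel W u v" using Rel_trans[OF m] by (auto elim: transpE)
qed (rule Rel_to_R)

end

lemma topspace_ideal_space: "topspace (ideal_space R) = ideals R"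
proof -
  have "\<Union> (range (basic_open R)) = ideals R"
  proof (intro set_eqI iffI)
    fix I assume "I \<in> ideals R"
    then obtain n where "n \<in> I" unfolding ideals_def is_ideal_def directed_in_def by blast
    then show "I \<in> \<Union> (range (basic_open R))" using \<open>I \<in> ideals R\<close> by (auto simp: basic_open_def)
  qed (auto simp: basic_open_def)
  then show ?thesis by (simp add: ideal_space_def)
qed

lemma openin_basic: "openin (ideal_space R) (basic_open R n)"
  unfolding ideal_space_def by (rule topology_generated_by_Basis) simp

context
  fixes Q R :: "nat \<Rightarrow> nat \<Rightarrow> bool" and \<phi> :: "nat \<Rightarrow> nat"
  assumes hQ: "\<And>u v. Q u v \<longleftrightarrow> R (\<phi> u) (\<phi> v)" and h\<phi>: "\<And>a. \<phi> (2 * a) = a"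
begin

definition hh :: "nat set \<Rightarrow> nat set" where "hh J = {m. 2 * m \<in> J}"
definition gg :: "nat set \<Rightarrow> nat set" where "gg I = {u. \<phi> u \<in> I}"

lemma real_in: "is_ideal Q J \<Longrightarrow> u \<in> J \<Longrightarrow> 2 * \<phi> u \<in> J"
proof -
  assume J: "is_ideal Q J" "u \<in> J"
  then obtain w where "w \<in> J" "Q u w" unfolding is_ideal_def directed_in_def by blast
  then have "Q (2 * \<phi> u) w" using hQ h\<phi> by simp
  then show ?thesis using J \<open>w \<in> J\<close> unfolding is_ideal_def by blast
qed

lemma real_in_iff: "is_ideal Q J \<Longrightarrow> 2 * \<phi> u \<in> J \<longleftrightarrow> u \<in> J"
proof
  assume J: "is_ideal Q J" "2 * \<phi> u \<in> J"
  then obtain w where "w \<in> J" "Q (2 * \<phi> u) w" unfolding is_ideal_def directed_in_def by blast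
  then have "Q u w" using hQ h\<phi> by simp
  then show "u \<in> J" using J \<open>w \<in> J\<close> unfolding is_ideal_def by blast
qed (rule real_in)

lemma hh_ideal: "is_ideal Q J \<Longrightarrow> is_ideal R (hh J)"
proof -
  assume J: "is_ideal Q J"
  have ne: "hh J \<noteq> {}"
  proof -
    obtain u where "u \<in> J" using J unfolding is_ideal_def directed_in_def by blast
    then have "\<phi> u \<in> hh J" using real_in[OF J] by (simp add: hh_def)
    then show ?thesis by blast
  qed
  have dir: "\<exists>z\<in>hh J. R x z \<and> R y z" if "x \<in> hh J" "y \<in> hh J" for x y
  proof -
    from that obtain w where "w \<in> J" "Q (2 * x) w" "Q (2 * y) w"
      using J unfolding is_ideal_def directed_in_def hh_def by blast
    then have "R x (\<phi> w)" "R y (\<phi> w)" "\<phi> w \<in> hh J" using hQ h\<phi> real_in[OF J] by (auto simp: hh_def)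
    then show ?thesis by blast
  qed
  have low: "x \<in> hh J" if "y \<in> hh J" "R x y" for x y
  proof -
    have "Q (2 * x) (2 * y)" using that hQ h\<phi> by simp
    then show ?thesis using that J unfolding is_ideal_def hh_def by blast
  qed
  show ?thesis unfolding is_ideal_def directed_in_def using ne dir low by blast
qed

lemma gg_ideal: "is_ideal R I \<Longrightarrow> is_ideal Q (gg I)"
proof -
  assume I: "is_ideal R I"
  have ne: "gg I \<noteq> {}"
  proof -
    obtain a where "a \<in> I" using I unfolding is_ideal_def directed_in_def by blast
    then have "2 * a \<in> gg I" by (simp add: gg_def h\<phi>)
    then show ?thesis by blast
  qed
  have dir: "\<exists>z\<in>gg I. Q x z \<and> Q y z" if "x \<in> gg I" "y \<in> gg I" for x y
  proof -
    from that obtain c where "c \<in> I" "R (\<phi> x) c" "R (\<phi> y) c"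
      using I unfolding is_ideal_def directed_in_def gg_def by blast
    then have "Q x (2 * c)" "Q y (2 * c)" "2 * c \<in> gg I" using hQ h\<phi> by (auto simp: gg_def)
    then show ?thesis by blast
  qed
  have low: "x \<in> gg I" if "y \<in> gg I" "Q x y" for x y
    using that I hQ unfolding is_ideal_def gg_def by blast
  show ?thesis unfolding is_ideal_def directed_in_def using ne dir low by blast
qed

lemma hh_gg: "hh (gg I) = I" by (simp add: hh_def gg_def h\<phi>)

lemma gg_hh: "is_ideal Q J \<Longrightarrow> gg (hh J) = J"
  using real_in_iff by (auto simp: hh_def gg_def)

lemma pre_hh: "{J \<in> ideals Q. hh J \<in> basic_open R n} = (\<Union>m\<in>{m. m = 2 * n}. basic_open Q m)"
  using hh_ideal by (auto simp: basic_open_def ideals_def hh_def)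

lemma pre_gg: "{I \<in> ideals R. gg I \<in> basic_open Q n} = (\<Union>m\<in>{m. Q n (2 * m)}. basic_open R m)"
proof (intro set_eqI iffI)
  fix I assume "I \<in> {I \<in> ideals R. gg I \<in> basic_open Q n}"
  then have I: "is_ideal R I" "\<phi> n \<in> I" by (auto simp: basic_open_def ideals_def gg_def)
  then obtain m where "m \<in> I" "R (\<phi> n) m" unfolding is_ideal_def directed_in_def by blast
  then have "Q n (2 * m)" using hQ h\<phi> by simp
  then show "I \<in> (\<Union>m\<in>{m. Q n (2 * m)}. basic_open R m)" using I \<open>m \<in> I\<close>
    by (auto simp: basic_open_def ideals_def)
next
  fix I assume "I \<in> (\<Union>m\<in>{m. Q n (2 * m)}. basic_open R m)"
  then obtain m where m: "Q n (2 * m)" "is_ideal R I" "m \<in> I" by (auto simp: basic_open_def ideals_def)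
  then have "\<phi> n \<in> I" using hQ h\<phi> unfolding is_ideal_def by auto
  then show "I \<in> {I \<in> ideals R. gg I \<in> basic_open Q n}" using m gg_ideal
    by (auto simp: basic_open_def ideals_def gg_def)
qed

lemma open_union: "openin (ideal_space R) (\<Union>m\<in>S. basic_open R m)"
  by (rule openin_Union) (auto simp: openin_basic)

lemma cont_hh: "continuous_map (ideal_space Q) (ideal_space R) hh"
  unfolding ideal_space_def[of R]
proof (rule continuous_on_generated_topo)
  show "hh ` topspace (ideal_space Q) \<subseteq> \<Union> (range (basic_open R))"
    using topspace_ideal_space[of Q] topspace_ideal_space[of R] hh_ideal
    by (auto simp: ideals_def ideal_space_def)
  fix U assume "U \<in> range (basic_open R)"
  then obtain n where U: "U = basic_open R n" by blast
  have "hh -` U \<inter> topspace (ideal_space Q) = {J \<in> ideals Q. hh J \<in> basic_open R n}"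
    using U topspace_ideal_space[of Q] by auto
  then show "openin (ideal_space Q) (hh -` U \<inter> topspace (ideal_space Q))"
    using pre_hh openin_basic by simp
qed

lemma cont_gg: "continuous_map (ideal_space R) (ideal_space Q) gg"
  unfolding ideal_space_def[of Q]
proof (rule continuous_on_generated_topo)
  show "gg ` topspace (ideal_space R) \<subseteq> \<Union> (range (basic_open Q))"
    using topspace_ideal_space[of Q] topspace_ideal_space[of R] gg_ideal
    by (auto simp: ideals_def ideal_space_def)
  fix U assume "U \<in> range (basic_open Q)"
  then obtain n where U: "U = basic_open Q n" by blast
  have "gg -` U \<inter> topspace (ideal_space R) = {I \<in> ideals R. gg I \<in> basic_open Q n}"
    using U topspace_ideal_space[of R] by auto
  then show "openin (ideal_space R) (gg -` U \<inter> topspace (ideal_space R))"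
    using pre_gg open_union by simp
qed

lemma homeo: "homeomorphic_maps (ideal_space Q) (ideal_space R) hh gg"
  unfolding homeomorphic_maps_def
  using cont_hh cont_gg hh_gg gg_hh topspace_ideal_space by (auto simp: ideals_def)

end

definition Ab :: "nat \<Rightarrow> nat \<Rightarrow> bool" where "Ab H s \<longleftrightarrow> nthc H s \<noteq> 0"

definition phT :: "nat \<Rightarrow> nat \<Rightarrow> nat \<Rightarrow> nat option" where
  "phT P t u = (if nthc P u \<noteq> 0 \<and> psnd (nthc P u - 1) \<le> t then Some (pfst (nthc P u - 1)) else None)"

definition genG :: "(nat \<Rightarrow> nat \<Rightarrow> nat \<Rightarrow> bool) \<Rightarrow> (nat \<Rightarrow> bool) \<Rightarrow> (nat \<Rightarrow> nat option) \<Rightarrow> nat \<Rightarrow> nat \<Rightarrow> nat \<Rightarrow> bool" where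
  "genG W A ph t u v \<longleftrightarrow>
    (even u \<and> even v \<and> W t (u div 2) (v div 2)) \<or>
    (odd u \<and> u div 2 < t \<and> v = ry (u div 2)) \<or>
    (odd v \<and> v div 2 < t \<and> A (v div 2) \<and> (u = rx1 (v div 2) \<or> u = rx2 (v div 2))) \<or>
    (even u \<and> odd v \<and> v div 2 < t \<and> ph v \<noteq> None \<and> W t (u div 2) (the (ph v))) \<or>
    (odd u \<and> even v \<and> u div 2 < t \<and> ph u \<noteq> None \<and> W t (the (ph u)) (v div 2))"

lemma gen_genG: "gen W A t u v = genG W A (phit W A t) t u v"
  unfolding gen_def genG_def by auto

definition ltG :: "(nat \<Rightarrow> nat \<Rightarrow> nat \<Rightarrow> bool) \<Rightarrow> (nat \<Rightarrow> bool) \<Rightarrow> (nat \<Rightarrow> nat option) \<Rightarrow> nat \<Rightarrow> nat \<Rightarrow> nat \<Rightarrow> bool" where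
  "ltG W A ph t u v \<longleftrightarrow> (\<exists>l<Suc t. 2 \<le> lenc l \<and> hdc l = u \<and> nthc l (lenc l - 1) = v \<and>
      (\<forall>i<lenc l - 1. genG W A ph t (nthc l i) (nthc l (Suc i))))"

lemma chn_nth: "chn G l \<longleftrightarrow> (\<forall>i. Suc i < length l \<longrightarrow> G (l ! i) (l ! Suc i))"
proof (induct l rule: induct_list012)
  case (3 x y zs)
  have "(\<forall>i. Suc i < length (x # y # zs) \<longrightarrow> G ((x # y # zs) ! i) ((x # y # zs) ! Suc i)) \<longleftrightarrow>
        G x y \<and> (\<forall>i. Suc i < length (y # zs) \<longrightarrow> G ((y # zs) ! i) ((y # zs) ! Suc i))"
  proof
    assume a: "\<forall>i. Suc i < length (x # y # zs) \<longrightarrow> G ((x # y # zs) ! i) ((x # y # zs) ! Suc i)"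
    show "G x y \<and> (\<forall>i. Suc i < length (y # zs) \<longrightarrow> G ((y # zs) ! i) ((y # zs) ! Suc i))"
    proof
      show "G x y" using a[rule_format, of 0] by simp
      show "\<forall>i. Suc i < length (y # zs) \<longrightarrow> G ((y # zs) ! i) ((y # zs) ! Suc i)"
        using a by (metis Suc_less_eq length_Cons nth_Cons_Suc)
    qed
  next
    assume a: "G x y \<and> (\<forall>i. Suc i < length (y # zs) \<longrightarrow> G ((y # zs) ! i) ((y # zs) ! Suc i))"
    show "\<forall>i. Suc i < length (x # y # zs) \<longrightarrow> G ((x # y # zs) ! i) ((x # y # zs) ! Suc i)"
    proof (intro allI impI)
      fix i assume "Suc i < length (x # y # zs)"
      then show "G ((x # y # zs) ! i) ((x # y # zs) ! Suc i)" using a by (cases i) auto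
    qed
  qed
  then show ?case using 3 by simp
qed auto

lemma ltG_cong: "(\<And>x. x \<le> t \<Longrightarrow> ph x = ph' x) \<Longrightarrow> ltG W A ph t u v = ltG W A ph' t u v"
proof -
  assume a: "\<And>x. x \<le> t \<Longrightarrow> ph x = ph' x"
  have "genG W A ph t p q = genG W A ph' t p q" if "p \<le> t" "q \<le> t" for p q
    using a[OF that(1)] a[OF that(2)] unfolding genG_def by simp
  moreover have "l < Suc t \<Longrightarrow> i < lenc l \<Longrightarrow> nthc l i \<le> t" for l i
  proof -
    assume "l < Suc t" "i < lenc l"
    obtain xs where xs: "l = list_encode xs" by (metis list_decode_inverse)
    then have "nthc l i \<in> set xs" using \<open>i < lenc l\<close> by simp
    then show ?thesis using mem_le_list_encode xs \<open>l < Suc t\<close> by fastforce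
  qed
  ultimately show ?thesis unfolding ltG_def
    by (intro ex_cong1 conj_cong refl all_cong1 imp_cong) (auto simp: less_diff_conv)
qed

lemma lt_ltG: "lt W A t u v \<longleftrightarrow> ltG W A (phit W A t) t u v"
proof
  assume "lt W A t u v"
  then obtain l where l: "list_encode l \<le> t" "2 \<le> length l" "hd l = u" "last l = v" "chn (gen W A t) l"
    unfolding lt_def by blast
  have "hdc (list_encode l) = u" using l(2,3) by (cases l) auto
  moreover have "nthc (list_encode l) (length l - 1) = v"
  proof -
    have "nthc (list_encode l) (length l - 1) = l ! (length l - 1)" using l(2) by (intro nthc_enc) simp
    also have "\<dots> = last l" using l(2) by (intro last_conv_nth[symmetric]) auto
    finally show ?thesis using l(4) by simp
  qed
  moreover have "\<forall>i<length l - 1. genG W A (phit W A t) t (nthc (list_encode l) i) (nthc (list_encode l) (Suc i))"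
    using l(5) unfolding chn_nth gen_genG by simp
  ultimately show "ltG W A (phit W A t) t u v" unfolding ltG_def using l(1,2)
    by (intro exI[of _ "list_encode l"]) simp
next
  assume "ltG W A (phit W A t) t u v"
  then obtain lc where lc: "lc < Suc t" "2 \<le> lenc lc" "hdc lc = u" "nthc lc (lenc lc - 1) = v"
    "\<forall>i<lenc lc - 1. genG W A (phit W A t) t (nthc lc i) (nthc lc (Suc i))" unfolding ltG_def by blast
  obtain l where l: "lc = list_encode l" by (metis list_decode_inverse)
  have "hd l = u" using lc(2,3) l by (cases l) (auto simp: lenc_def)
  moreover have "last l = v"
  proof -
    have "2 \<le> length l" using lc(2) l by simp
    then have "nthc (list_encode l) (length l - 1) = l ! (length l - 1)" by (intro nthc_enc) simp
    also have "\<dots> = last l" using \<open>2 \<le> length l\<close> by (intro last_conv_nth[symmetric]) auto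
    finally show ?thesis using lc(4) l by simp
  qed
  moreover have "chn (gen W A t) l" unfolding chn_nth gen_genG using lc(5) l by simp
  ultimately show "lt W A t u v" unfolding lt_def using lc(1,2) l by (intro exI[of _ l]) simp
qed


definition leastc :: "nat \<Rightarrow> (nat \<Rightarrow> bool) \<Rightarrow> nat" where
  "leastc n P = (\<Sum>i<Suc n. of_bool (\<forall>j<Suc i. \<not> P j))"

lemma leastc_eq: "P w \<Longrightarrow> w \<le> n \<Longrightarrow> leastc n P = (LEAST w. P w)"
proof -
  assume pw: "P w" and wn: "w \<le> n"
  let ?w0 = "LEAST w. P w"
  have w0: "P ?w0" "?w0 \<le> w" using pw by (auto intro: LeastI Least_le)
  have "{i. i < Suc n \<and> (\<forall>j<Suc i. \<not> P j)} = {i. i < ?w0}"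
  proof (intro set_eqI iffI)
    fix i assume "i \<in> {i. i < Suc n \<and> (\<forall>j<Suc i. \<not> P j)}"
    then have "\<forall>j<Suc i. \<not> P j" by simp
    then show "i \<in> {i. i < ?w0}" using w0(1) by (metis less_Suc_eq_le mem_Collect_eq not_le)
  next
    fix i assume "i \<in> {i. i < ?w0}"
    then have i: "i < ?w0" by simp
    have "\<not> P j" if "j < Suc i" for j using that i not_less_Least[of j P] by simp
    then show "i \<in> {i. i < Suc n \<and> (\<forall>j<Suc i. \<not> P j)}" using i w0(2) wn by auto
  qed
  then show ?thesis unfolding leastc_def sum_of_bool_card by simp
qed

definition encT :: "nat \<Rightarrow> (nat \<times> nat) option \<Rightarrow> nat" where
  "encT T x = (case x of None \<Rightarrow> 0 | Some (c, f) \<Rightarrow> if f \<le> T then Suc (prod_encode (c, f)) else 0)"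

definition phistep :: "(nat \<Rightarrow> nat \<Rightarrow> nat \<Rightarrow> bool) \<Rightarrow> nat \<Rightarrow> nat \<Rightarrow> nat \<Rightarrow> nat \<Rightarrow> nat" where
  "phistep W H P T u = (if even u then Suc (prod_encode (u div 2, 0)) else
    (if nthc P (ry (u div 2)) \<noteq> 0 \<and> nthc P (rx1 (u div 2)) \<noteq> 0 \<and> nthc P (rx2 (u div 2)) \<noteq> 0 then
      (if \<exists>w<Suc T. cnd W (Ab H) (u div 2) (pfst (nthc P (rx1 (u div 2)) - 1)) (pfst (nthc P (rx2 (u div 2)) - 1))
                                   (pfst (nthc P (ry (u div 2)) - 1)) w then
        (if max (leastc T (cnd W (Ab H) (u div 2) (pfst (nthc P (rx1 (u div 2)) - 1)) (pfst (nthc P (rx2 (u div 2)) - 1))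
                                   (pfst (nthc P (ry (u div 2)) - 1))))
                (max (psnd (nthc P (ry (u div 2)) - 1)) (max (psnd (nthc P (rx1 (u div 2)) - 1)) (psnd (nthc P (rx2 (u div 2)) - 1)))) \<le> T
         then Suc (prod_encode (pfst (leastc T (cnd W (Ab H) (u div 2) (pfst (nthc P (rx1 (u div 2)) - 1)) (pfst (nthc P (rx2 (u div 2)) - 1))
                                   (pfst (nthc P (ry (u div 2)) - 1)))),
                max (leastc T (cnd W (Ab H) (u div 2) (pfst (nthc P (rx1 (u div 2)) - 1)) (pfst (nthc P (rx2 (u div 2)) - 1))
                                   (pfst (nthc P (ry (u div 2)) - 1))))
                (max (psnd (nthc P (ry (u div 2)) - 1)) (max (psnd (nthc P (rx1 (u div 2)) - 1)) (psnd (nthc P (rx2 (u div 2)) - 1))))))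
         else 0)
       else 0)
     else 0))"

lemma encT_nz: "encT T x \<noteq> 0 \<longleftrightarrow> (\<exists>c f. x = Some (c, f) \<and> f \<le> T)"
  by (auto simp: encT_def split: option.splits)

lemma encT_Some: "f \<le> T \<Longrightarrow> encT T (Some (c, f)) = Suc (prod_encode (c, f))"
  by (simp add: encT_def)

lemma phiW_odd_eq: "odd u \<Longrightarrow> phiW W A u = (case phiW W A (ry (u div 2)) of None \<Rightarrow> None | Some (b, fy) \<Rightarrow>
     (case phiW W A (rx1 (u div 2)) of None \<Rightarrow> None | Some (a1, f1) \<Rightarrow>
     (case phiW W A (rx2 (u div 2)) of None \<Rightarrow> None | Some (a2, f2) \<Rightarrow>
       (if \<exists>w. cnd W A (u div 2) a1 a2 b w
        then Some (pfst (LEAST w. cnd W A (u div 2) a1 a2 b w),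
                   max (LEAST w. cnd W A (u div 2) a1 a2 b w) (max fy (max f1 f2)))
        else None))))"
  by (subst phiW.simps) simp

lemma phistep_correct:
  assumes odd_hyp: "odd u \<Longrightarrow> Ab H (u div 2) = A (u div 2)"
    and ey: "odd u \<Longrightarrow> nthc P (ry (u div 2)) = encT T (phiW W A (ry (u div 2)))"
    and e1: "odd u \<Longrightarrow> nthc P (rx1 (u div 2)) = encT T (phiW W A (rx1 (u div 2)))"
    and e2: "odd u \<Longrightarrow> nthc P (rx2 (u div 2)) = encT T (phiW W A (rx2 (u div 2)))"
  shows "phistep W H P T u = encT T (phiW W A u)"
proof (cases "even u")
  case True then show ?thesis by (simp add: phistep_def phiW_even encT_def)
next
  case False
  let ?s = "u div 2"
  have cA: "cnd W (Ab H) ?s = cnd W A ?s" using odd_hyp[OF False] by (auto simp: cnd_def fun_eq_iff)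
  show ?thesis
  proof (cases "nthc P (ry ?s) \<noteq> 0 \<and> nthc P (rx1 ?s) \<noteq> 0 \<and> nthc P (rx2 ?s) \<noteq> 0")
    case True
    then obtain b fy a1 f1 a2 f2 where c: "phiW W A (ry ?s) = Some (b, fy)" "fy \<le> T"
      "phiW W A (rx1 ?s) = Some (a1, f1)" "f1 \<le> T" "phiW W A (rx2 ?s) = Some (a2, f2)" "f2 \<le> T"
      using ey[OF False] e1[OF False] e2[OF False] encT_nz by metis
    have E: "nthc P (ry ?s) = Suc (prod_encode (b, fy))" "nthc P (rx1 ?s) = Suc (prod_encode (a1, f1))"
      "nthc P (rx2 ?s) = Suc (prod_encode (a2, f2))"
      using ey[OF False] e1[OF False] e2[OF False] c by (simp_all add: encT_Some)
    have pu: "phiW W A u = (if \<exists>w. cnd W A ?s a1 a2 b w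
        then Some (pfst (LEAST w. cnd W A ?s a1 a2 b w),
                   max (LEAST w. cnd W A ?s a1 a2 b w) (max fy (max f1 f2)))
        else None)" using phiW_odd_eq[OF False, of W A] c by simp
    show ?thesis
    proof (cases "\<exists>w<Suc T. cnd W A ?s a1 a2 b w")
      case True
      then obtain w where w: "w < Suc T" "cnd W A ?s a1 a2 b w" by blast
      have lc: "leastc T (cnd W A ?s a1 a2 b) = (LEAST w. cnd W A ?s a1 a2 b w)"
        using leastc_eq[of "cnd W A ?s a1 a2 b" w T] w by simp
      show ?thesis unfolding phistep_def using False True E cA pu lc w
        by (auto simp: encT_def)
    next
      case nw: False
      have "encT T (phiW W A u) = 0"
      proof (cases "\<exists>w. cnd W A ?s a1 a2 b w")
        case True
        then have "T < (LEAST w. cnd W A ?s a1 a2 b w)" using nw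
          by (metis LeastI_ex le_less_trans not_less_eq not_le)
        then show ?thesis using pu True by (simp add: encT_def)
      qed (use pu in \<open>simp add: encT_def\<close>)
      then show ?thesis unfolding phistep_def using False nw E cA by simp
    qed
  next
    case nz: False
    have "encT T (phiW W A u) = 0"
    proof (rule ccontr)
      assume "encT T (phiW W A u) \<noteq> 0"
      then obtain c f where cf: "phiW W A u = Some (c, f)" "f \<le> T" using encT_nz by metis
      obtain b fy a1 f1 a2 f2 where "phiW W A (ry ?s) = Some (b, fy)"
        "phiW W A (rx1 ?s) = Some (a1, f1)" "phiW W A (rx2 ?s) = Some (a2, f2)"
        "f = max (LEAST w. cnd W A ?s a1 a2 b w) (max fy (max f1 f2))"
        by (rule phiW_oddD[OF False cf(1)])
      then show False using nz cf(2) ey[OF False] e1[OF False] e2[OF False] by (simp add: encT_def)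
    qed
    then show ?thesis unfolding phistep_def using False nz by simp
  qed
qed


definition checkH :: "(nat \<Rightarrow> nat \<Rightarrow> nat \<Rightarrow> bool) \<Rightarrow> nat \<Rightarrow> nat \<Rightarrow> nat \<Rightarrow> bool" where
  "checkH W H P T \<longleftrightarrow> lenc H = T \<and> (\<forall>s<T. Ab H s = (ltG W (Ab H) (phT P s) s (rx1 s) (ry s) \<and> ltG W (Ab H) (phT P s) s (rx2 s) (ry s)))"

definition checkP :: "(nat \<Rightarrow> nat \<Rightarrow> nat \<Rightarrow> bool) \<Rightarrow> nat \<Rightarrow> nat \<Rightarrow> nat \<Rightarrow> bool" where
  "checkP W H P T \<longleftrightarrow> lenc P = Suc T \<and> (\<forall>u<Suc T. nthc P u = phistep W H P T u)"

definition relP :: "(nat \<Rightarrow> nat \<Rightarrow> nat \<Rightarrow> bool) \<Rightarrow> nat \<Rightarrow> nat \<Rightarrow> bool" where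
  "relP W x y \<longleftrightarrow> (\<exists>T H P. checkH W H P T \<and> checkP W H P T \<and> ltG W (Ab H) (phT P T) T x y)"

lemma phT_correct: "nthc P u = encT T (phiW W A u) \<Longrightarrow> t \<le> T \<Longrightarrow> phT P t u = phit W A t u"
  by (auto simp: phT_def phit_def encT_def split: option.splits)

lemma genG_congA: "(\<And>j. j < t \<Longrightarrow> A j = A' j) \<Longrightarrow> genG W A ph t u v = genG W A' ph t u v"
  unfolding genG_def by (simp cong: conj_cong)

lemma ltG_congA: "(\<And>j. j < t \<Longrightarrow> A j = A' j) \<Longrightarrow> ltG W A ph t u v = ltG W A' ph t u v"
proof -
  assume "\<And>j. j < t \<Longrightarrow> A j = A' j"
  then have "genG W A ph t = genG W A' ph t" using genG_congA by (intro ext) blast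
  then show ?thesis unfolding ltG_def by simp
qed

lemma odd_div_lt: "odd (u::nat) \<Longrightarrow> u \<le> T \<Longrightarrow> u div 2 < T" by (auto elim!: oddE)
lemma comps_lt: "odd u \<Longrightarrow> ry (u div 2) < u \<and> rx1 (u div 2) < u \<and> rx2 (u div 2) < u"
  using lt_aux[of "u div 2"] by (auto elim!: oddE)

lemma ltG_step:
  assumes "\<And>j. j < n \<Longrightarrow> Ab H j = act W j" "\<And>x. x \<le> n \<Longrightarrow> nthc P x = encT T (phiW W (act W) x)" "n \<le> T"
  shows "ltG W (Ab H) (phT P n) n u v = lt W (act W) n u v"
proof -
  have "ltG W (Ab H) (phT P n) n u v = ltG W (act W) (phT P n) n u v" using assms(1) by (rule ltG_congA)
  also have "\<dots> = ltG W (act W) (phit W (act W) n) n u v"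
    using assms(2,3) phT_correct by (intro ltG_cong) blast
  finally show ?thesis using lt_ltG by simp
qed

lemma check_correct:
  assumes cH: "checkH W H P T" and cP: "checkP W H P T"
  shows "(\<forall>j<n. j < T \<longrightarrow> Ab H j = act W j) \<and> (\<forall>u<n. u \<le> T \<longrightarrow> nthc P u = encT T (phiW W (act W) u))"
proof (induct n)
  case 0 then show ?case by simp
next
  case (Suc n)
  have IH1: "j < n \<Longrightarrow> j < T \<Longrightarrow> Ab H j = act W j" for j using Suc by blast
  have IH2: "u < n \<Longrightarrow> u \<le> T \<Longrightarrow> nthc P u = encT T (phiW W (act W) u)" for u using Suc by blast
  have new2: "nthc P n = encT T (phiW W (act W) n)" if "n \<le> T"
  proof -
    have "nthc P n = phistep W H P T n" using cP that unfolding checkP_def by simp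
    also have "\<dots> = encT T (phiW W (act W) n)"
    proof (rule phistep_correct)
      assume o: "odd n"
      show "Ab H (n div 2) = act W (n div 2)" using IH1 o that by (auto elim!: oddE)
      show "nthc P (ry (n div 2)) = encT T (phiW W (act W) (ry (n div 2)))"
        using IH2 comps_lt[OF o] that by simp
      show "nthc P (rx1 (n div 2)) = encT T (phiW W (act W) (rx1 (n div 2)))"
        using IH2 comps_lt[OF o] that by simp
      show "nthc P (rx2 (n div 2)) = encT T (phiW W (act W) (rx2 (n div 2)))"
        using IH2 comps_lt[OF o] that by simp
    qed
    finally show ?thesis .
  qed
  have new1: "Ab H n = act W n" if "n < T"
  proof -
    have e: "x \<le> n \<Longrightarrow> nthc P x = encT T (phiW W (act W) x)" for x
      using IH2 new2 that by (metis le_less less_imp_le_nat order.strict_trans2)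
    have "Ab H n = (ltG W (Ab H) (phT P n) n (rx1 n) (ry n) \<and> ltG W (Ab H) (phT P n) n (rx2 n) (ry n))"
      using cH that unfolding checkH_def by simp
    also have "\<dots> = (lt W (act W) n (rx1 n) (ry n) \<and> lt W (act W) n (rx2 n) (ry n))"
      using ltG_step[of n H W P T] IH1 e that by simp
    also have "\<dots> = act W n" using act_eq[of W n] by (simp add: Fa_def)
    finally show ?thesis .
  qed
  show ?case using IH1 IH2 new1 new2 by (auto simp: less_Suc_eq)
qed

lemma relP_Rel: "relP W x y \<longleftrightarrow> Rel W x y"
proof
  assume "relP W x y"
  then obtain T H P where c: "checkH W H P T" "checkP W H P T" "ltG W (Ab H) (phT P T) T x y"
    unfolding relP_def by blast
  have "(\<forall>j<Suc T. j < T \<longrightarrow> Ab H j = act W j) \<and> (\<forall>u<Suc T. u \<le> T \<longrightarrow> nthc P u = encT T (phiW W (act W) u))"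
    by (rule check_correct[OF c(1,2)])
  then have "ltG W (Ab H) (phT P T) T x y = lt W (act W) T x y"
    by (intro ltG_step) auto
  then show "Rel W x y" using c(3) unfolding Rel_def by blast
next
  assume "Rel W x y"
  then obtain T where l: "lt W (act W) T x y" unfolding Rel_def by blast
  define H where "H = list_encode (map (\<lambda>s. of_bool (act W s)) [0..<T])"
  define P where "P = list_encode (map (\<lambda>u. encT T (phiW W (act W) u)) [0..<Suc T])"
  have AH: "j < T \<Longrightarrow> Ab H j = act W j" for j by (simp add: H_def Ab_def)
  have EP: "u \<le> T \<Longrightarrow> nthc P u = encT T (phiW W (act W) u)" for u
    by (simp add: P_def del: upt_Suc)
  have cP: "checkP W H P T" unfolding checkP_def
  proof (intro conjI allI impI)
    show "lenc P = Suc T" by (simp add: P_def del: upt_Suc)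
    fix u assume u: "u < Suc T"
    have "phistep W H P T u = encT T (phiW W (act W) u)"
    proof (rule phistep_correct)
      assume o: "odd u"
      show "Ab H (u div 2) = act W (u div 2)" using AH o u by (auto elim!: oddE)
      show "nthc P (ry (u div 2)) = encT T (phiW W (act W) (ry (u div 2)))"
        using EP comps_lt[OF o] u by simp
      show "nthc P (rx1 (u div 2)) = encT T (phiW W (act W) (rx1 (u div 2)))"
        using EP comps_lt[OF o] u by simp
      show "nthc P (rx2 (u div 2)) = encT T (phiW W (act W) (rx2 (u div 2)))"
        using EP comps_lt[OF o] u by simp
    qed
    then show "nthc P u = phistep W H P T u" using EP u by simp
  qed
  have cH: "checkH W H P T" unfolding checkH_def
  proof (intro conjI allI impI)
    show "lenc H = T" by (simp add: H_def)
    fix s assume s: "s < T"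
    have "(ltG W (Ab H) (phT P s) s (rx1 s) (ry s) \<and> ltG W (Ab H) (phT P s) s (rx2 s) (ry s)) =
          (lt W (act W) s (rx1 s) (ry s) \<and> lt W (act W) s (rx2 s) (ry s))"
      using ltG_step[of s H W P T] AH EP s by simp
    also have "\<dots> = act W s" using act_eq[of W s] by (simp add: Fa_def)
    finally show "Ab H s = (ltG W (Ab H) (phT P s) s (rx1 s) (ry s) \<and> ltG W (Ab H) (phT P s) s (rx2 s) (ry s))"
      using AH s by simp
  qed
  have "ltG W (Ab H) (phT P T) T x y" using ltG_step[of T H W P T] AH EP l by simp
  then show "relP W x y" unfolding relP_def using cH cP by blast
qed

lemma ob_eq0: "((of_bool P :: nat) = 0) = (\<not> P)" by simp

definition "eDIV2 x = Sm x (eLE (Ml (C 2) (Sc (V 0))) (lift x))"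
lemma den_eDIV2[simp]: "den (eDIV2 x) env = den x env div 2"
proof -
  have "{i. i < den x env \<and> 2 * Suc i \<le> den x env} = {i. i < den x env div 2}" by auto
  then show ?thesis unfolding eDIV2_def by (simp add: sum_of_bool_card)
qed

definition "eEVEN x = eEQ x (Ml (C 2) (eDIV2 x))"
lemma den_eEVEN[simp]: "den (eEVEN x) env = of_bool (even (den x env))"
  unfolding eEVEN_def by (auto simp: dvd_mult_div_cancel elim: oddE)

definition "eRX1 s = ePF s"
definition "eRX2 s = ePF (ePS s)"
definition "eRY s = ePF (ePS (ePS s))"
lemma den_eRX[simp]: "den (eRX1 s) env = rx1 (den s env)" "den (eRX2 s) env = rx2 (den s env)"
  "den (eRY s) env = ry (den s env)"
  by (simp_all add: eRX1_def eRX2_def eRY_def rx1_def rx2_def ry_def)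

definition "eAb H s = eNOT (eEQ (eNTH H s) (C 0))"
lemma den_eAb[simp]: "den (eAb H s) env = of_bool (Ab (den H env) (den s env))"
  by (simp add: eAb_def Ab_def)

definition oenc :: "nat option \<Rightarrow> nat" where "oenc x = (case x of None \<Rightarrow> 0 | Some c \<Rightarrow> Suc c)"

definition "ePHT P t u = eIF (eAND (eNOT (eEQ (eNTH P u) (C 0))) (eLE (ePS (Sb (eNTH P u) (C 1))) t))
   (Sc (ePF (Sb (eNTH P u) (C 1)))) (C 0)"
lemma den_ePHT[simp]: "den (ePHT P t u) env = oenc (phT (den P env) (den t env) (den u env))"
  by (simp add: ePHT_def phT_def oenc_def)

lemma oenc_ne0: "(oenc x \<noteq> 0) = (x \<noteq> None)" by (simp add: oenc_def split: option.splits)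
lemma oenc_the: "x \<noteq> None \<Longrightarrow> oenc x - 1 = the x" by (auto simp: oenc_def)

definition "eGENG e H P t u v =
  eOR (eAND (eEVEN u) (eAND (eEVEN v) (WTE e t (eDIV2 u) (eDIV2 v))))
  (eOR (eAND (eNOT (eEVEN u)) (eAND (eLT (eDIV2 u) t) (eEQ v (eRY (eDIV2 u)))))
  (eOR (eAND (eNOT (eEVEN v)) (eAND (eLT (eDIV2 v) t) (eAND (eAb H (eDIV2 v)) (eOR (eEQ u (eRX1 (eDIV2 v))) (eEQ u (eRX2 (eDIV2 v)))))))
  (eOR (eAND (eEVEN u) (eAND (eNOT (eEVEN v)) (eAND (eLT (eDIV2 v) t) (eAND (eNOT (eEQ (ePHT P t v) (C 0))) (WTE e t (eDIV2 u) (Sb (ePHT P t v) (C 1)))))))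
       (eAND (eNOT (eEVEN u)) (eAND (eEVEN v) (eAND (eLT (eDIV2 u) t) (eAND (eNOT (eEQ (ePHT P t u) (C 0))) (WTE e t (Sb (ePHT P t u) (C 1)) (eDIV2 v)))))))))"

lemma den_eGENG[simp]: "den (eGENG e H P t u v) env =
  of_bool (genG (Wtc (den e env)) (Ab (den H env)) (phT (den P env) (den t env)) (den t env) (den u env) (den v env))"
proof -
  have a: "(oenc x \<noteq> 0 \<and> Q (oenc x - 1)) = (x \<noteq> None \<and> Q (the x))" for x :: "nat option" and Q
    by (auto simp: oenc_def split: option.splits)
  have a2: "(oenc x \<noteq> 0 \<and> Wtc ee tt (oenc x - 1) bb) = (x \<noteq> None \<and> Wtc ee tt (the x) bb)" for x ee tt bb
    by (auto simp: oenc_def split: option.splits)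
  show ?thesis unfolding eGENG_def genG_def
    by (simp only: den_OR den_AND den_NOT den_EQ den_LT den_eEVEN den_eDIV2 den_WTE den_eAb den_eRX den_ePHT
      den.simps(2) den.simps(5) ob_ne0 ob_eq0 not_not conj_assoc a a2)
qed


lemma den_V1: "den (V (Suc 0)) (a # b # env) = b" by simp
lemma den_Sc: "den (Sc x) env = Suc (den x env)" by simp
lemma den_Sb: "den (Sb x y) env = den x env - den y env" by simp
lemma den_C: "den (C k) env = k" by simp

definition "eLTG e H P t u v = eEX (Sc t) (eAND (eLE (C 2) (eLEN (V 0))) (eAND (eEQ (eHD (V 0)) (lift u))
   (eAND (eEQ (eNTH (V 0) (Sb (eLEN (V 0)) (C 1))) (lift v))
     (eALL (Sb (eLEN (V 0)) (C 1)) (eGENG (lift2 e) (lift2 H) (lift2 P) (lift2 t) (eNTH (V 1) (V 0)) (eNTH (V 1) (Sc (V 0))))))))"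

lemma den_eLTG[simp]: "den (eLTG e H P t u v) env =
  of_bool (ltG (Wtc (den e env)) (Ab (den H env)) (phT (den P env) (den t env)) (den t env) (den u env) (den v env))"
  unfolding eLTG_def ltG_def
  by (simp only: den_EX den_ALL den_AND den_EQ den_LE den_LEN den_HD den_NTH den_eGENG den_lift den_lift2 den_V0 den_V1
     den_Sc den_Sb den_C ob_ne0 ob_eq0 not_not One_nat_def)

definition "eCHECKH e H P T = eAND (eEQ (eLEN H) T) (eALL T (eEQ (eAb (lift H) (V 0))
   (eAND (eLTG (lift e) (lift H) (lift P) (V 0) (eRX1 (V 0)) (eRY (V 0))) (eLTG (lift e) (lift H) (lift P) (V 0) (eRX2 (V 0)) (eRY (V 0))))))"

lemma den_eCHECKH[simp]: "den (eCHECKH e H P T) env = of_bool (checkH (Wtc (den e env)) (den H env) (den P env) (den T env))"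
  unfolding eCHECKH_def checkH_def
  by (simp only: den_ALL den_AND den_EQ den_LEN den_eAb den_eLTG den_lift den_V0 den_eRX ob_ne0 ob_eq0 not_not of_bool_eq_iff)

definition "eCND e H s a1 a2 b w = eAND (WTE e (ePS w) (ePF w) b)
   (eIMP (eAb H s) (eAND (WTE e (ePS w) a1 (ePF w)) (WTE e (ePS w) a2 (ePF w))))"
lemma den_eCND[simp]: "den (eCND e H s a1 a2 b w) env =
   of_bool (cnd (Wtc (den e env)) (Ab (den H env)) (den s env) (den a1 env) (den a2 env) (den b env) (den w env))"
  unfolding eCND_def cnd_def
  by (simp only: den_AND den_IMP den_WTE den_eAb den_ePF' den_ePS' ob_ne0)

definition "eLEASTC T e H s a1 a2 b = Sm (Sc T) (eALL (Sc (V 0)) (eNOT (eCND (lift2 e) (lift2 H) (lift2 s) (lift2 a1) (lift2 a2) (lift2 b) (V 0))))"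
lemma den_eLEASTC[simp]: "den (eLEASTC T e H s a1 a2 b) env =
   leastc (den T env) (cnd (Wtc (den e env)) (Ab (den H env)) (den s env) (den a1 env) (den a2 env) (den b env))"
  unfolding eLEASTC_def leastc_def
  by (simp only: den.simps(7) den_Sc den_ALL den_NOT den_eCND den_lift2 den_V0 ob_eq0 ob_ne0 not_not)

definition "eMAX a b = eIF (eLE a b) b a"
lemma den_eMAX[simp]: "den (eMAX a b) env = max (den a env) (den b env)"
  by (simp add: eMAX_def max_def)


definition "ePHISTEP e H P T u = (let s = eDIV2 u; Ey = eNTH P (eRY s); E1 = eNTH P (eRX1 s); E2 = eNTH P (eRX2 s);
   b = ePF (Sb Ey (C 1)); a1 = ePF (Sb E1 (C 1)); a2 = ePF (Sb E2 (C 1));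
   fy = ePS (Sb Ey (C 1)); f1 = ePS (Sb E1 (C 1)); f2 = ePS (Sb E2 (C 1));
   L = eLEASTC T e H s a1 a2 b; F = eMAX L (eMAX fy (eMAX f1 f2)) in
   eIF (eEVEN u) (Sc (ePE (eDIV2 u) (C 0)))
    (eIF (eAND (eNOT (eEQ Ey (C 0))) (eAND (eNOT (eEQ E1 (C 0))) (eNOT (eEQ E2 (C 0)))))
      (eIF (eEX (Sc T) (eCND (lift e) (lift H) (lift s) (lift a1) (lift a2) (lift b) (V 0)))
         (eIF (eLE F T) (Sc (ePE (ePF L) F)) (C 0))
         (C 0))
      (C 0)))"

lemma den_ePHISTEP[simp]: "den (ePHISTEP e H P T u) env = phistep (Wtc (den e env)) (den H env) (den P env) (den T env) (den u env)"
  unfolding ePHISTEP_def Let_def phistep_def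
  by (simp only: den_IF den_eEVEN den_PE den_eDIV2 den_NTH den_eRX den_ePF' den_ePS' den_Sb den_C den_AND den_NOT
    den_EQ den_EX den_eCND den_lift den_V0 den_eLEASTC den_eMAX den_LE den_Sc ob_ne0 ob_eq0 not_not One_nat_def)

definition "eCHECKP e H P T = eAND (eEQ (eLEN P) (Sc T)) (eALL (Sc T) (eEQ (eNTH (lift P) (V 0)) (ePHISTEP (lift e) (lift H) (lift P) (lift T) (V 0))))"

lemma den_eCHECKP[simp]: "den (eCHECKP e H P T) env = of_bool (checkP (Wtc (den e env)) (den H env) (den P env) (den T env))"
  unfolding eCHECKP_def checkP_def
  by (simp only: den_ALL den_AND den_EQ den_LEN den_NTH den_ePHISTEP den_lift den_V0 den_Sc ob_ne0)

definition "eFIN = eAND (eCHECKH (V 1) (ePF (ePS (V 0))) (ePS (ePS (V 0))) (ePF (V 0)))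
  (eAND (eCHECKP (V 1) (ePF (ePS (V 0))) (ePS (ePS (V 0))) (ePF (V 0)))
        (eLTG (V 1) (ePF (ePS (V 0))) (ePS (ePS (V 0))) (ePF (V 0)) (V 2) (V 3)))"

lemma den_eFIN: "den eFIN [w, e, x, y] = of_bool (checkH (Wtc e) (pfst (psnd w)) (psnd (psnd w)) (pfst w) \<and>
   checkP (Wtc e) (pfst (psnd w)) (psnd (psnd w)) (pfst w) \<and>
   ltG (Wtc e) (Ab (pfst (psnd w))) (phT (psnd (psnd w)) (pfst w)) (pfst w) x y)"
  unfolding eFIN_def by simp

definition "RsF = Mu (compile 4 (eNOT eFIN))"

lemma RsF_iff: "(\<exists>z. eval RsF [e, x, y] z) \<longleftrightarrow> Rel (Wtc e) x y"
proof -
  have "(\<exists>z. eval RsF [e, x, y] z) \<longleftrightarrow> (\<exists>w. den (eNOT eFIN) (w # [e, x, y]) = 0)"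
    unfolding RsF_def using eval_Mu_compile[of "[e, x, y]" 3 "eNOT eFIN"] by simp
  also have "\<dots> \<longleftrightarrow> relP (Wtc e) x y"
  proof
    assume "\<exists>w. den (eNOT eFIN) [w, e, x, y] = 0"
    then obtain w where "den eFIN [w, e, x, y] \<noteq> 0" by auto
    then show "relP (Wtc e) x y" unfolding relP_def den_eFIN by auto
  next
    assume "relP (Wtc e) x y"
    then obtain T H P where c: "checkH (Wtc e) H P T" "checkP (Wtc e) H P T" "ltG (Wtc e) (Ab H) (phT P T) T x y"
      unfolding relP_def by blast
    have "den eFIN [prod_encode (T, prod_encode (H, P)), e, x, y] \<noteq> 0" using c by (simp add: den_eFIN)
    then show "\<exists>w. den (eNOT eFIN) [w, e, x, y] = 0" by (intro exI[of _ "prod_encode (T, prod_encode (H, P))"]) simp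
  qed
  also have "\<dots> \<longleftrightarrow> Rel (Wtc e) x y" by (rule relP_Rel)
  finally show ?thesis .
qed

lemma eval_Comp_iff:
  assumes "length gs = length vs" "\<And>k. k < length gs \<Longrightarrow> eval (gs ! k) xs (vs ! k)"
  shows "eval (Comp f gs) xs z \<longleftrightarrow> eval f vs z"
proof
  assume "eval (Comp f gs) xs z"
  then obtain ys where ys: "list_all2 (\<lambda>g y. eval g xs y) gs ys" "eval f ys z"
    by (cases rule: eval.cases) auto
  have "ys = vs"
  proof (rule nth_equalityI)
    show "length ys = length vs" using ys(1) assms(1) list_all2_lengthD by force
    fix k assume "k < length ys"
    then have "k < length gs" using ys(1) list_all2_lengthD by force
    then show "ys ! k = vs ! k" using ys(1) assms(2) eval_det list_all2_nthD by blast
  qed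
  then show "eval f vs z" using ys(2) by simp
next
  assume "eval f vs z"
  moreover have "list_all2 (\<lambda>g y. eval g xs y) gs vs"
    using assms by (simp add: list_all2_conv_all_nth)
  ultimately show "eval (Comp f gs) xs z" by (rule eval_Comp[rotated])
qed

lemma ce_double: "ce_rel (\<lambda>n m. m = 2 * n)"
proof -
  let ?p = "eNOT (eEQ (V 2) (Ml (C 2) (V 1)))"
  have "(\<exists>z. eval (Mu (compile 3 ?p)) [n, m] z) \<longleftrightarrow> (\<exists>w. den ?p (w # [n, m]) = 0)" for n m
    using eval_Mu_compile[of "[n, m]" 2 ?p] by simp
  then show ?thesis unfolding ce_rel_def by (intro exI[of _ "Mu (compile 3 ?p)"]) auto
qed

lemma ce_Rs2: "ce_rel (\<lambda>n m. Rel (Wtc i) n (2 * m))"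
proof -
  let ?f = "Comp RsF [cst i, Proj 0, compile 2 (Ml (C 2) (V 1))]"
  have "eval ?f [n, m] z \<longleftrightarrow> eval RsF [i, n, 2 * m] z" for n m z
  proof (rule eval_Comp_iff)
    fix k assume "k < length [cst i, Proj 0, compile 2 (Ml (C 2) (V 1))]"
    then have "k = 0 \<or> k = 1 \<or> k = 2" by auto
    then show "eval ([cst i, Proj 0, compile 2 (Ml (C 2) (V 1))] ! k) [n, m] ([i, n, 2 * m] ! k)"
      using eval_cst[of i "[n, m]"] eval_Proj'[of 0 "[n, m]" n] compile_correct[of "[n, m]" 2 "Ml (C 2) (V 1)"]
      by auto
  qed simp
  then have "(\<exists>z. eval ?f [n, m] z) \<longleftrightarrow> Rel (Wtc i) n (2 * m)" for n m
    using RsF_iff[of i n "2 * m"] by simp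
  then show ?thesis unfolding ce_rel_def by (intro exI[of _ ?f]) blast
qed

theorem theorem21:
  shows "\<exists>Rs :: nat \<Rightarrow> nat \<Rightarrow> nat \<Rightarrow> bool.
           uniformly_ce_rels Rs \<and>
           (\<forall>i. transp (Rs i) \<and> interpolable (Rs i)) \<and>
           (\<forall>R. ce_rel R \<and> transp R \<and> interpolable R \<longrightarrow>
                (\<exists>i. computably_homeomorphic (Rs i) R))"
proof (intro exI[of _ "\<lambda>i. Rel (Wtc i)"] conjI allI impI)
  show "uniformly_ce_rels (\<lambda>i. Rel (Wtc i))"
    unfolding uniformly_ce_rels_def using RsF_iff by blast
  have m: "Wmono (Wtc i)" for i unfolding Wmono_def using Wtc_mono by blast
  fix i
  show "transp (Rel (Wtc i))" by (rule Rel_trans[OF m])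
  show "interpolable (Rel (Wtc i))" by (rule Rel_interp[OF m])
next
  fix R assume R: "ce_rel R \<and> transp R \<and> interpolable R"
  then obtain g where g: "\<And>x y. R x y \<longleftrightarrow> (\<exists>z. eval g [x, y] z)" unfolding ce_rel_def by blast
  let ?i = "code g"
  have m: "Wmono (Wtc ?i)" unfolding Wmono_def using Wtc_mono by blast
  have iff: "\<And>a b. R a b \<longleftrightarrow> (\<exists>t. Wtc ?i t a b)" using g Wtc_code by blast
  have tr: "transp R" and ip: "interpolable R" using R by auto
  let ?phi = "phi (Wtc ?i)"
  have hQ: "\<And>u v. Rel (Wtc ?i) u v \<longleftrightarrow> R (?phi u) (?phi v)" using Rel_iff[OF m iff tr ip] .
  have hphi: "\<And>a. ?phi (2 * a) = a" using phi_even[OF m iff tr ip] .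
  show "\<exists>i. computably_homeomorphic (Rel (Wtc i)) R"
  proof (intro exI[of _ ?i])
    show "computably_homeomorphic (Rel (Wtc ?i)) R"
      unfolding computably_homeomorphic_def
    proof (intro exI conjI)
      show "homeomorphic_maps (ideal_space (Rel (Wtc ?i))) (ideal_space R) hh (gg ?phi)"
        by (rule homeo[of "Rel (Wtc ?i)" R ?phi, OF hQ hphi])
      show "ce_preimages (Rel (Wtc ?i)) R hh"
        unfolding ce_preimages_def using pre_hh[of "Rel (Wtc ?i)" R ?phi, OF hQ hphi] ce_double by blast
      show "ce_preimages R (Rel (Wtc ?i)) (gg ?phi)"
        unfolding ce_preimages_def using pre_gg[of "Rel (Wtc ?i)" R ?phi, OF hQ hphi] ce_Rs2 by blast
    qed
  qed
qed

end
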